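(* Assume $\pi\ge0$ and let $\mathbf r$ be an arbitrary $L\times L$ stochastic matrix. Let $j$ be such that $m_j:=\sum_{i=1}^L\sigma_i r_{ij}>0$. Define $$g_j(d)=\frac{1}{m_j}\sum_{i=1}^L\sigma_i r_{ij}\Big(\sqrt\alpha\,h_{ij}-\pi\alpha\big(d-\sqrt\alpha\,h_{jj}\big)\Big)^+-d,\qquad d\in\mathbb R .$$ Then $g_j$ has a unique zero $\bar d_j^*$. Moreover, almost surely $\bar D_{j,t}\to\bar d_j^*$ as $t\to\infty$. Equivalently, with $N_j(d)=\min\{i:\ h_{ij}>\sqrt\alpha\,\pi(d-\sqrt\alpha h_{jj})\}$ (and sums over an empty index set equal to $0$), $\bar d_j^*$ is the unique solution of $$\bar d_j^*=\frac{\sqrt\alpha\sum_{i=N_j(\bar d_j^* )}^{L}\sigma_i r_{ij}\big(h_{ij}+\pi\alpha h_{jj}\big)}{\sum_{i=1}^L\sigma_i r_{ij}+\pi\alpha\sum_{i=N_j(\bar d_j^* )}^{L}\sigma_i r_{ij}}.$$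
   Context: Supply-chain model. The parameters are a price-sensitivity $\alpha\in(0,1]$, a manufacturer's per-unit production cost $C_m\ge0$, and a supplier's per-unit procurement cost $C_s\ge0$. For $x\in\mathbb R$ write $x^+=\max\{0,x\}$. The market potential takes values $\phi_1<\dots<\phi_L$ with probabilities $\sigma_1,\dots,\sigma_L>0$ summing to $1$, and $\phi_1>\alpha(C_s+C_m)$. Set $$h_{ij}=\frac{2\phi_i-\phi_j-\alpha(C_m+C_s)}{4\sqrt\alpha},\qquad q^*(\phi)=\frac{\phi+\alpha(C_s-C_m)}{2\alpha}.$$ Dynamic system. Let $\mathbf r=(r_{ij})$ be an $L\times L$ stochastic matrix (nonnegative entries, rows summing to $1$); over- and under-reporting are both allowed. The pairs $(\Phi_t,\hat\Phi_t)$, $t=1,2,\dots$, are i.i.d. with $P(\Phi_t=\phi_i,\hat\Phi_t=\phi_j)=\sigma_i r_{ij}$. Here $\Phi_t$ is the true potential in slot $t$ and $\hat\Phi_t$ is the reported one. The noises $\{\mathcal N_t\}$ are i.i.d., bounded, have zero mean, and are independent of $\{(\Phi_t,\hat\Phi_t)\}$. Fix a penalty parameter $\pi$ and, for each $j$, an arbitrary initial value $\bar D_{j,0}\in\mathbb R$. For $t\ge1$, define $\bar D_{j,t}$ as the average of $D_s$ over the slots $s\le t$ with $\hat\Phi_s=\phi_j$, namely $$\bar D_{j,t}=\frac{\sum_{s\le t}D_s\mathbf 1\{\hat\Phi_s=\phi_j\}}{\sum_{s\le t}\mathbf 1\{\hat\Phi_s=\phi_j\}}.$$ If no such slot exists yet,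 set $\bar D_{j,t}=\bar D_{j,0}$. In slot $t$, if $\hat\Phi_t=\phi_j$, the supplier quotes $$Q_t=q^*(\phi_j)+2\pi\big(\bar D_{j,t-1}-\sqrt\alpha\,h_{jj}\big).$$ The manufacturer then sets $$P_t=\frac{\Phi_t+\alpha(Q_t+C_m)}{2\alpha},$$ and the realized demand is $$D_t=(\Phi_t-\alpha P_t)^++\mathcal N_t .$$ *)

theory Defs
  imports "HOL-Probability.Probability"
begin

text \<open>Indices of the market-potential levels are 0-based: 0,...,L-1
  (paper: 1,...,L). Time slots are 0-based: slot t here is slot t+1 of the paper.\<close>

definition hh :: "real \<Rightarrow> real \<Rightarrow> real \<Rightarrow> (nat \<Rightarrow> real) \<Rightarrow> nat \<Rightarrow> nat \<Rightarrow> real" where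
  "hh \<alpha> Cm Cs \<phi> i j = (2 * \<phi> i - \<phi> j - \<alpha> * (Cm + Cs)) / (4 * sqrt \<alpha>)"

definition qstar :: "real \<Rightarrow> real \<Rightarrow> real \<Rightarrow> real \<Rightarrow> real" where
  "qstar \<alpha> Cm Cs x = (x + \<alpha> * (Cs - Cm)) / (2 * \<alpha>)"

definition avg_rep :: "(nat \<Rightarrow> real) \<Rightarrow> (nat \<Rightarrow> nat) \<Rightarrow> real \<Rightarrow> nat \<Rightarrow> nat \<Rightarrow> real" where
  "avg_rep D rep d0 j t =
     (let S = {s. s < t \<and> rep s = j}
      in if card S = 0 then d0 else (\<Sum>s\<in>S. D s) / real (card S))"

definition demand_step ::
  "real \<Rightarrow> real \<Rightarrow> real \<Rightarrow> real \<Rightarrow> (nat \<Rightarrow> real) \<Rightarrow> (nat \<Rightarrow> real)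
   \<Rightarrow> (nat \<Rightarrow> nat) \<Rightarrow> (nat \<Rightarrow> nat) \<Rightarrow> (nat \<Rightarrow> real) \<Rightarrow> real list \<Rightarrow> real" where
  "demand_step \<alpha> Cm Cs \<pi> \<phi> d0 idx rep nz ds =
     (let t = length ds; j = rep t;
          Db = avg_rep (\<lambda>s. ds ! s) rep (d0 j) j t;
          Q = qstar \<alpha> Cm Cs (\<phi> j) + 2 * \<pi> * (Db - sqrt \<alpha> * hh \<alpha> Cm Cs \<phi> j j);
          P = (\<phi> (idx t) + \<alpha> * (Q + Cm)) / (2 * \<alpha>)
      in max 0 (\<phi> (idx t) - \<alpha> * P) + nz t)"

primrec demand_hist ::
  "real \<Rightarrow> real \<Rightarrow> real \<Rightarrow> real \<Rightarrow> (nat \<Rightarrow> real) \<Rightarrow> (nat \<Rightarrow> real)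
   \<Rightarrow> (nat \<Rightarrow> nat) \<Rightarrow> (nat \<Rightarrow> nat) \<Rightarrow> (nat \<Rightarrow> real) \<Rightarrow> nat \<Rightarrow> real list" where
  "demand_hist \<alpha> Cm Cs \<pi> \<phi> d0 idx rep nz 0 = []"
| "demand_hist \<alpha> Cm Cs \<pi> \<phi> d0 idx rep nz (Suc t) =
     (let ds = demand_hist \<alpha> Cm Cs \<pi> \<phi> d0 idx rep nz t
      in ds @ [demand_step \<alpha> Cm Cs \<pi> \<phi> d0 idx rep nz ds])"

definition demand ::
  "real \<Rightarrow> real \<Rightarrow> real \<Rightarrow> real \<Rightarrow> (nat \<Rightarrow> real) \<Rightarrow> (nat \<Rightarrow> real)
   \<Rightarrow> (nat \<Rightarrow> nat) \<Rightarrow> (nat \<Rightarrow> nat) \<Rightarrow> (nat \<Rightarrow> real) \<Rightarrow> nat \<Rightarrow> real" where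
  "demand \<alpha> Cm Cs \<pi> \<phi> d0 idx rep nz t = demand_hist \<alpha> Cm Cs \<pi> \<phi> d0 idx rep nz (Suc t) ! t"

definition Dbar ::
  "real \<Rightarrow> real \<Rightarrow> real \<Rightarrow> real \<Rightarrow> (nat \<Rightarrow> real) \<Rightarrow> (nat \<Rightarrow> real)
   \<Rightarrow> (nat \<Rightarrow> nat) \<Rightarrow> (nat \<Rightarrow> nat) \<Rightarrow> (nat \<Rightarrow> real) \<Rightarrow> nat \<Rightarrow> nat \<Rightarrow> real" where
  "Dbar \<alpha> Cm Cs \<pi> \<phi> d0 idx rep nz j t =
     avg_rep (demand \<alpha> Cm Cs \<pi> \<phi> d0 idx rep nz) rep (d0 j) j t"

definition gfun ::
  "real \<Rightarrow> real \<Rightarrow> real \<Rightarrow> real \<Rightarrow> (nat \<Rightarrow> real) \<Rightarrow> (nat \<Rightarrow> real)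
   \<Rightarrow> (nat \<Rightarrow> nat \<Rightarrow> real) \<Rightarrow> nat \<Rightarrow> nat \<Rightarrow> real \<Rightarrow> real" where
  "gfun \<alpha> Cm Cs \<pi> \<phi> \<sigma> r L j d =
     (1 / (\<Sum>i<L. \<sigma> i * r i j)) *
       (\<Sum>i<L. \<sigma> i * r i j *
          max 0 (sqrt \<alpha> * hh \<alpha> Cm Cs \<phi> i j - \<pi> * \<alpha> * (d - sqrt \<alpha> * hh \<alpha> Cm Cs \<phi> j j)))
     - d"

text \<open>N_j(d): least (0-based) index i with h_ij > sqrt(alpha) pi (d - sqrt(alpha) h_jj);
  L if there is none (so that the sums from N_j(d) are empty).\<close>
definition Nidx ::
  "real \<Rightarrow> real \<Rightarrow> real \<Rightarrow> real \<Rightarrow> (nat \<Rightarrow> real) \<Rightarrow> nat \<Rightarrow> nat \<Rightarrow> real \<Rightarrow> nat" where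
  "Nidx \<alpha> Cm Cs \<pi> \<phi> L j d =
     (if \<exists>i<L. hh \<alpha> Cm Cs \<phi> i j > sqrt \<alpha> * \<pi> * (d - sqrt \<alpha> * hh \<alpha> Cm Cs \<phi> j j)
      then LEAST i. i < L \<and> hh \<alpha> Cm Cs \<phi> i j > sqrt \<alpha> * \<pi> * (d - sqrt \<alpha> * hh \<alpha> Cm Cs \<phi> j j)
      else L)"

definition fixed_point_eq ::
  "real \<Rightarrow> real \<Rightarrow> real \<Rightarrow> real \<Rightarrow> (nat \<Rightarrow> real) \<Rightarrow> (nat \<Rightarrow> real)
   \<Rightarrow> (nat \<Rightarrow> nat \<Rightarrow> real) \<Rightarrow> nat \<Rightarrow> nat \<Rightarrow> real \<Rightarrow> bool" where
  "fixed_point_eq \<alpha> Cm Cs \<pi> \<phi> \<sigma> r L j d =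
     (let N = Nidx \<alpha> Cm Cs \<pi> \<phi> L j d in
      d = sqrt \<alpha> * (\<Sum>i\<in>{N..<L}. \<sigma> i * r i j * (hh \<alpha> Cm Cs \<phi> i j + \<pi> * \<alpha> * hh \<alpha> Cm Cs \<phi> j j))
          / ((\<Sum>i<L. \<sigma> i * r i j) + \<pi> * \<alpha> * (\<Sum>i\<in>{N..<L}. \<sigma> i * r i j)))"

end

theory Submission
  imports Defs
begin


lemma cesaro_zero:
  fixes b :: "nat \<Rightarrow> real"
  assumes b: "b \<longlonglongrightarrow> 0"
  shows "(\<lambda>t. (\<Sum>s<t. b s) / real t) \<longlonglongrightarrow> 0"
proof (rule LIMSEQ_I)
  fix e :: real assume e: "0 < e"
  from LIMSEQ_D[OF b, of "e/2"] e obtain N where N: "\<And>s. s \<ge> N \<Longrightarrow> \<bar>b s\<bar> < e/2" by auto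
  define K where "K = (\<Sum>s<N. \<bar>b s\<bar>)"
  have K0: "K \<ge> 0" unfolding K_def by (intro sum_nonneg) auto
  obtain M :: nat where M: "M > 2*K/e" using reals_Archimedean2 by blast
  show "\<exists>no. \<forall>n\<ge>no. norm ((\<Sum>s<n. b s) / real n - 0) < e"
  proof (intro exI allI impI)
    fix n assume n: "n \<ge> max (Suc N) M"
    hence nN: "n \<ge> N" and npos: "real n > 0" and nM: "real n \<ge> M" by auto
    have split: "(\<Sum>s<n. b s) = (\<Sum>s<N. b s) + (\<Sum>s\<in>{N..<n}. b s)"
      using nN by (metis atLeast0LessThan le0 sum.atLeastLessThan_concat)
    have a1: "\<bar>\<Sum>s<N. b s\<bar> \<le> K" unfolding K_def by (rule sum_abs)
    have "\<bar>\<Sum>s\<in>{N..<n}. b s\<bar> \<le> (\<Sum>s\<in>{N..<n}. \<bar>b s\<bar>)" by (rule sum_abs)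
    also have "\<dots> \<le> (\<Sum>s\<in>{N..<n}. e/2)" using N by (intro sum_mono) (auto intro: less_imp_le)
    also have "\<dots> = real (n - N) * (e/2)" by simp
    also have "\<dots> \<le> real n * (e/2)" using e by (intro mult_right_mono) auto
    finally have a2: "\<bar>\<Sum>s\<in>{N..<n}. b s\<bar> \<le> real n * (e/2)" .
    have "\<bar>\<Sum>s<n. b s\<bar> \<le> K + real n * (e/2)" using a1 a2 split by linarith
    also have "K < real n * (e/2)"
    proof -
      have "2*K/e < real n" using M nM by linarith
      thus ?thesis using e by (simp add: field_simps)
    qed
    finally have "\<bar>\<Sum>s<n. b s\<bar> < real n * e" by linarith
    thus "norm ((\<Sum>s<n. b s) / real n - 0) < e" using npos by (simp add: field_simps abs_divide)
  qed
qed

lemma sum_by_parts_nat: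
  fixes a g :: "nat \<Rightarrow> real"
  shows "(\<Sum>s<t. a s * g s) = (\<Sum>s<t. a s) * g t - (\<Sum>s<t. (\<Sum>r<Suc s. a r) * (g (Suc s) - g s))"
proof (induction t)
  case (Suc t)
  show ?case unfolding sum.lessThan_Suc Suc.IH by (simp add: algebra_simps)
qed simp

lemma abel_o:
  fixes a g :: "nat \<Rightarrow> real"
  assumes A: "(\<lambda>t. (\<Sum>s<t. a s) / real t) \<longlonglongrightarrow> 0"
    and G: "\<And>s. \<bar>g s\<bar> \<le> G"
    and D: "eventually (\<lambda>s. real (Suc s) * \<bar>g (Suc s) - g s\<bar> \<le> K) sequentially"
  shows "(\<lambda>t. (\<Sum>s<t. a s * g s) / real t) \<longlonglongrightarrow> 0"
proof -
  have G0: "G \<ge> 0" using G[of 0] by linarith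
  have t1: "(\<lambda>t. ((\<Sum>s<t. a s) * g t) / real t) \<longlonglongrightarrow> 0"
  proof (rule tendsto_0_le[OF A, where K=G])
    show "\<forall>\<^sub>F t in sequentially. norm ((\<Sum>s<t. a s) * g t / real t) \<le> norm ((\<Sum>s<t. a s) / real t) * G"
    proof (intro always_eventually allI)
      fix t
      have "norm ((\<Sum>s<t. a s) * g t / real t) = \<bar>(\<Sum>s<t. a s) / real t\<bar> * \<bar>g t\<bar>"
        by (simp add: abs_mult abs_divide)
      also have "\<dots> \<le> \<bar>(\<Sum>s<t. a s) / real t\<bar> * G" by (intro mult_left_mono G) auto
      finally show "norm ((\<Sum>s<t. a s) * g t / real t) \<le> norm ((\<Sum>s<t. a s) / real t) * G" by simp
    qed
  qed
  have A1: "(\<lambda>s. (\<Sum>r<Suc s. a r) / real (Suc s)) \<longlonglongrightarrow> 0"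
    using LIMSEQ_Suc[OF A] by simp
  have b0: "(\<lambda>s. (\<Sum>r<Suc s. a r) * (g (Suc s) - g s)) \<longlonglongrightarrow> 0"
  proof (rule tendsto_0_le[OF A1, where K=K])
    show "\<forall>\<^sub>F s in sequentially. norm ((\<Sum>r<Suc s. a r) * (g (Suc s) - g s)) \<le> norm ((\<Sum>r<Suc s. a r) / real (Suc s)) * K"
      using D
    proof eventually_elim
      case (elim s)
      have "norm ((\<Sum>r<Suc s. a r) * (g (Suc s) - g s)) = \<bar>(\<Sum>r<Suc s. a r) / real (Suc s)\<bar> * (real (Suc s) * \<bar>g (Suc s) - g s\<bar>)"
        by (simp add: abs_mult abs_divide)
      also have "\<dots> \<le> \<bar>(\<Sum>r<Suc s. a r) / real (Suc s)\<bar> * K"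
        using elim by (intro mult_left_mono) auto
      finally show ?case by simp
    qed
  qed
  have t2: "(\<lambda>t. (\<Sum>s<t. (\<Sum>r<Suc s. a r) * (g (Suc s) - g s)) / real t) \<longlonglongrightarrow> 0"
    by (rule cesaro_zero[OF b0])
  have "(\<lambda>t. ((\<Sum>s<t. a s) * g t) / real t - (\<Sum>s<t. (\<Sum>r<Suc s. a r) * (g (Suc s) - g s)) / real t) \<longlonglongrightarrow> 0 - 0"
    by (intro tendsto_diff t1 t2)
  thus ?thesis by (subst sum_by_parts_nat) (simp add: diff_divide_distrib)
qed


lemma key_step:
  fixes m c r e x y y' \<delta> :: real
  assumes mc: "m \<ge> c" and c0: "c \<ge> 0" and m1: "m \<ge> 1"
    and r: "\<bar>r\<bar> \<le> e" and x: "x = y + r" and dx: "\<delta> * x \<le> 0" and dl: "\<bar>\<delta>\<bar> \<le> c * \<bar>x\<bar>"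
    and rec: "(m + 1) * y' = m * y + \<delta>"
  shows "(m + 1) * max 0 (\<bar>y'\<bar> - e) \<le> m * max 0 (\<bar>y\<bar> - e)"
proof -
  have e0: "e \<ge> 0" using r by linarith
  obtain \<beta> where b0: "0 \<le> \<beta>" and bc: "\<beta> \<le> c" and db: "\<delta> = - \<beta> * x"
  proof (cases "x = 0")
    case True
    show ?thesis using True dl c0 by (intro that[of 0]) auto
  next
    case False
    define \<beta> where "\<beta> = - \<delta> / x"
    have "\<delta> = - \<beta> * x" using False unfolding \<beta>_def by simp
    moreover have "\<beta> \<ge> 0"
    proof -
      have be: "\<beta> = - (\<delta> * x) / (x * x)" using False unfolding \<beta>_def by (simp add: field_simps)
      have xx: "x * x > 0" using False by (metis not_real_square_gt_zero)
      have h1: "- (\<delta> * x) / (x * x) \<ge> 0" using dx xx by (intro divide_nonneg_pos) auto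
      show ?thesis by (subst be) (rule h1)
    qed
    moreover have "\<beta> \<le> c"
    proof -
      have "\<bar>\<beta>\<bar> = \<bar>\<delta>\<bar> / \<bar>x\<bar>" unfolding \<beta>_def by (simp add: abs_divide)
      also have "\<dots> \<le> c" using dl False by (simp add: divide_le_eq mult.commute)
      finally show ?thesis by simp
    qed
    ultimately show ?thesis using that by blast
  qed
  define P where "P = max 0 (\<bar>y\<bar> - e)"
  have P0: "P \<ge> 0" and yP: "\<bar>y\<bar> \<le> P + e" unfolding P_def by auto
  have "m * y + \<delta> = (m - \<beta>) * y - \<beta> * r" using db x by (simp add: algebra_simps)
  hence "\<bar>m * y + \<delta>\<bar> \<le> \<bar>(m - \<beta>) * y\<bar> + \<bar>\<beta> * r\<bar>" by (metis abs_triangle_ineq4)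
  also have "\<bar>(m - \<beta>) * y\<bar> = (m - \<beta>) * \<bar>y\<bar>" using bc mc by (simp add: abs_mult)
  also have "\<bar>\<beta> * r\<bar> = \<beta> * \<bar>r\<bar>" using b0 by (simp add: abs_mult)
  also have "(m - \<beta>) * \<bar>y\<bar> \<le> (m - \<beta>) * (P + e)" using bc mc yP by (intro mult_left_mono) auto
  also have "\<beta> * \<bar>r\<bar> \<le> \<beta> * e" using b0 r by (intro mult_left_mono) auto
  finally have A: "\<bar>m * y + \<delta>\<bar> \<le> (m - \<beta>) * (P + e) + \<beta> * e" by simp
  have "(m - \<beta>) * (P + e) + \<beta> * e = (m - \<beta>) * P + m * e" by (simp add: algebra_simps)
  also have "(m - \<beta>) * P \<le> m * P" using b0 P0 by (simp add: mult_right_mono)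
  finally have B: "\<bar>(m + 1) * y'\<bar> \<le> m * P + m * e" using A rec by simp
  have m1p: "m + 1 > 0" using m1 by simp
  have "(m + 1) * max 0 (\<bar>y'\<bar> - e) = max 0 ((m + 1) * \<bar>y'\<bar> - (m + 1) * e)"
    using m1p by (simp add: max_mult_distrib_left algebra_simps)
  also have "(m + 1) * \<bar>y'\<bar> = \<bar>(m + 1) * y'\<bar>" using m1p by (simp add: abs_mult)
  also have "max 0 (\<bar>(m + 1) * y'\<bar> - (m + 1) * e) \<le> m * P"
    using B P0 m1 e0 by (auto simp: algebra_simps)
  finally show ?thesis unfolding P_def .
qed

lemma det_core:
  fixes J :: "nat \<Rightarrow> bool" and C Db W Y :: "nat \<Rightarrow> real" and F :: "real \<Rightarrow> real"
  assumes CJ: "\<And>t. J t \<Longrightarrow> C (Suc t) = C t + 1"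
    and CnJ: "\<And>t. \<not> J t \<Longrightarrow> C (Suc t) = C t"
    and DbJ: "\<And>t. J t \<Longrightarrow> C t > 0 \<Longrightarrow> C (Suc t) * Db (Suc t) = C t * Db t + Y t"
    and DbnJ: "\<And>t. \<not> J t \<Longrightarrow> Db (Suc t) = Db t"
    and WJ: "\<And>t. J t \<Longrightarrow> W (Suc t) = W t + (Y t - F (Db t))"
    and WnJ: "\<And>t. \<not> J t \<Longrightarrow> W (Suc t) = W t"
    and Cinf: "filterlim C at_top sequentially"
    and Wo: "(\<lambda>t. W t / C t) \<longlonglongrightarrow> 0"
    and Fmono: "\<And>x y. x \<le> y \<Longrightarrow> F y \<le> F x"
    and Flip: "\<And>x y. \<bar>F x - F y\<bar> \<le> c * \<bar>x - y\<bar>"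
    and c0: "c \<ge> 0"
    and fixp: "F ds = ds"
  shows "Db \<longlonglongrightarrow> ds"
proof (rule LIMSEQ_I)
  fix r :: real assume r0: "r > 0"
  define e where "e = r / 4"
  have e0: "e > 0" using r0 unfolding e_def by simp
  have Call: "\<And>Z. eventually (\<lambda>t. Z \<le> C t) sequentially" using Cinf filterlim_at_top by blast
  have ev1: "eventually (\<lambda>t. C t \<ge> max c 1) sequentially" by (rule Call)
  have ev2: "eventually (\<lambda>t. \<bar>W t / C t\<bar> \<le> e) sequentially"
    using LIMSEQ_D[OF Wo e0] by (auto simp: eventually_sequentially intro: less_imp_le)
  from eventually_conj[OF ev1 ev2] obtain T where T: "\<And>t. t \<ge> T \<Longrightarrow> C t \<ge> max c 1 \<and> \<bar>W t / C t\<bar> \<le> e"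
    by (auto simp: eventually_sequentially)
  define y where "y t = Db t - ds - W t / C t" for t
  define Q where "Q t = C t * max 0 (\<bar>y t\<bar> - e)" for t
  have Qstep: "Q (Suc t) \<le> Q t" if tT: "t \<ge> T" for t
  proof (cases "J t")
    case False
    then show ?thesis unfolding Q_def y_def using CnJ DbnJ WnJ by simp
  next
    case True
    define m where "m = C t"
    have m1: "m \<ge> 1" and mc: "m \<ge> c" and rW: "\<bar>W t / m\<bar> \<le> e" using T[OF tT] unfolding m_def by auto
    have m0: "m > 0" using m1 by simp
    have CS: "C (Suc t) = m + 1" using CJ[OF True] m_def by simp
    have rec1: "(m + 1) * Db (Suc t) = m * Db t + Y t" using DbJ[OF True] m0 CS m_def by simp
    have WS: "W (Suc t) = W t + (Y t - F (Db t))" using WJ[OF True] .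
    have ysuc: "(m + 1) * y (Suc t) = m * y t + (F (Db t) - F ds)"
    proof -
      have "(m + 1) * y (Suc t) = (m + 1) * Db (Suc t) - (m + 1) * ds - W (Suc t)"
        unfolding y_def CS using m0 by (simp add: field_simps)
      also have "\<dots> = m * Db t + Y t - (m + 1) * ds - (W t + (Y t - F (Db t)))" using rec1 WS by simp
      also have "\<dots> = m * (Db t - ds - W t / m) + (F (Db t) - ds)" using m0 by (simp add: field_simps)
      finally show ?thesis unfolding y_def m_def using fixp by simp
    qed
    have dx: "(F (Db t) - F ds) * (Db t - ds) \<le> 0"
    proof (cases "Db t \<le> ds")
      case True
      then show ?thesis using Fmono[OF True] by (intro mult_nonneg_nonpos) auto
    next
      case False
      then show ?thesis using Fmono[of ds "Db t"] by (intro mult_nonpos_nonneg) auto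
    qed
    have "(m + 1) * max 0 (\<bar>y (Suc t)\<bar> - e) \<le> m * max 0 (\<bar>y t\<bar> - e)"
      by (rule key_step[OF mc c0 m1 rW _ dx Flip ysuc]) (simp add: y_def m_def)
    then show ?thesis unfolding Q_def CS m_def .
  qed
  have Qle: "Q t \<le> Q T" if "t \<ge> T" for t
    using that
  proof (induction t rule: dec_induct)
    case (step n)
    then show ?case using Qstep[of n] by linarith
  qed simp
  have Q0: "Q T \<ge> 0" using T[of T] unfolding Q_def by auto
  have ev3: "eventually (\<lambda>t. C t \<ge> max 1 (Q T / e)) sequentially" by (rule Call)
  from ev3 obtain T2 where T2: "\<And>t. t \<ge> T2 \<Longrightarrow> C t \<ge> max 1 (Q T / e)" by (auto simp: eventually_sequentially)
  show "\<exists>no. \<forall>n\<ge>no. norm (Db n - ds) < r"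
  proof (intro exI allI impI)
    fix n assume n: "n \<ge> max T T2"
    have Cn: "C n \<ge> 1" "C n \<ge> Q T / e" using T2[of n] n by auto
    have Cp: "C n > 0" using Cn by simp
    have "C n * max 0 (\<bar>y n\<bar> - e) \<le> Q T" using Qle[of n] n unfolding Q_def by simp
    also have "Q T \<le> C n * e" using Cn e0 by (simp add: divide_le_eq mult.commute)
    finally have "max 0 (\<bar>y n\<bar> - e) \<le> e" using Cp by simp
    hence yb: "\<bar>y n\<bar> \<le> 2 * e" by simp
    have wb: "\<bar>W n / C n\<bar> \<le> e" using T[of n] n by (simp only: max.bounded_iff)
    have "\<bar>Db n - ds\<bar> \<le> \<bar>y n\<bar> + \<bar>W n / C n\<bar>" unfolding y_def by (metis abs_triangle_ineq diff_add_cancel)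
    also have "\<dots> \<le> 3 * e" using yb wb by simp
    also have "\<dots> < r" unfolding e_def using r0 by simp
    finally show "norm (Db n - ds) < r" by simp
  qed
qed


lemma demand_hist_length: "length (demand_hist \<alpha> Cm Cs \<pi> \<phi> d0 idx rep nz t) = t"
  by (induction t) (simp_all add: Let_def)

lemma demand_hist_nth_aux: "s < t \<Longrightarrow> demand_hist \<alpha> Cm Cs \<pi> \<phi> d0 idx rep nz t ! s = demand_hist \<alpha> Cm Cs \<pi> \<phi> d0 idx rep nz (Suc s) ! s"
proof (induction t)
  case 0 then show ?case by simp
next
  case (Suc t)
  show ?case
  proof (cases "s < t")
    case True
    then show ?thesis using Suc.IH by (simp add: Let_def nth_append demand_hist_length)
  next
    case False
    then have "s = t" using Suc.prems by simp
    then show ?thesis by simp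
  qed
qed

lemma demand_hist_nth: "s < t \<Longrightarrow> demand_hist \<alpha> Cm Cs \<pi> \<phi> d0 idx rep nz t ! s = demand \<alpha> Cm Cs \<pi> \<phi> d0 idx rep nz s"
  unfolding demand_def by (rule demand_hist_nth_aux)

lemma demand_step_eq: "demand \<alpha> Cm Cs \<pi> \<phi> d0 idx rep nz t = demand_step \<alpha> Cm Cs \<pi> \<phi> d0 idx rep nz (demand_hist \<alpha> Cm Cs \<pi> \<phi> d0 idx rep nz t)"
  unfolding demand_def by (simp add: Let_def nth_append demand_hist_length)

lemma avg_rep_cong: "(\<And>s. s < t \<Longrightarrow> D s = D' s) \<Longrightarrow> avg_rep D rep d0 j t = avg_rep D' rep d0 j t"
  unfolding avg_rep_def Let_def by (auto intro!: sum.cong)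

lemma demand_formula:
  assumes a: "\<alpha> > 0" and rt: "rep t = j" and it: "idx t = i"
  shows "demand \<alpha> Cm Cs \<pi> \<phi> d0 idx rep nz t =
    max 0 (sqrt \<alpha> * hh \<alpha> Cm Cs \<phi> i j - \<pi> * \<alpha> * (Dbar \<alpha> Cm Cs \<pi> \<phi> d0 idx rep nz j t - sqrt \<alpha> * hh \<alpha> Cm Cs \<phi> j j)) + nz t"
proof -
  let ?ds = "demand_hist \<alpha> Cm Cs \<pi> \<phi> d0 idx rep nz t"
  have avg: "avg_rep (\<lambda>s. ?ds ! s) rep (d0 j) j t = Dbar \<alpha> Cm Cs \<pi> \<phi> d0 idx rep nz j t"
    unfolding Dbar_def by (rule avg_rep_cong) (simp add: demand_hist_nth)
  define Db where "Db = Dbar \<alpha> Cm Cs \<pi> \<phi> d0 idx rep nz j t"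
  have sa: "sqrt \<alpha> > 0" using a by simp
  have hs: "sqrt \<alpha> * hh \<alpha> Cm Cs \<phi> i j = (2 * \<phi> i - \<phi> j - \<alpha> * (Cm + Cs)) / 4"
    unfolding hh_def using sa by (simp add: field_simps)
  have "demand \<alpha> Cm Cs \<pi> \<phi> d0 idx rep nz t =
     max 0 (\<phi> i - \<alpha> * ((\<phi> i + \<alpha> * (qstar \<alpha> Cm Cs (\<phi> j) + 2 * \<pi> * (Db - sqrt \<alpha> * hh \<alpha> Cm Cs \<phi> j j) + Cm)) / (2 * \<alpha>))) + nz t"
    unfolding demand_step_eq demand_step_def Let_def demand_hist_length rt it avg Db_def ..
  also have "\<phi> i - \<alpha> * ((\<phi> i + \<alpha> * (qstar \<alpha> Cm Cs (\<phi> j) + 2 * \<pi> * (Db - sqrt \<alpha> * hh \<alpha> Cm Cs \<phi> j j) + Cm)) / (2 * \<alpha>))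
     = sqrt \<alpha> * hh \<alpha> Cm Cs \<phi> i j - \<pi> * \<alpha> * (Db - sqrt \<alpha> * hh \<alpha> Cm Cs \<phi> j j)"
    unfolding hs qstar_def using a by (simp add: field_simps)
  finally show ?thesis unfolding Db_def .
qed


locale model =
  fixes \<alpha> Cm Cs \<pi> :: real and \<phi> \<sigma> :: "nat \<Rightarrow> real" and r :: "nat \<Rightarrow> nat \<Rightarrow> real" and L j :: nat
  assumes alpha: "\<alpha> > 0" and pi0: "\<pi> \<ge> 0" and phimono: "strict_mono_on {..<L} \<phi>"
    and w0: "\<And>i. i < L \<Longrightarrow> \<sigma> i * r i j \<ge> 0"
    and mpos: "(\<Sum>i<L. \<sigma> i * r i j) > 0"
begin

definition "m = (\<Sum>i<L. \<sigma> i * r i j)"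
definition "w i = \<sigma> i * r i j" for i
definition "c = \<pi> * \<alpha>"
definition "hj i = hh \<alpha> Cm Cs \<phi> i j" for i
definition "fi i d = max 0 (sqrt \<alpha> * hj i - \<pi> * \<alpha> * (d - sqrt \<alpha> * hj j))" for i d
definition "FF d = (1 / m) * (\<Sum>i<L. w i * fi i d)" for d

lemma m_pos: "m > 0" using mpos unfolding m_def .
lemma c0: "c \<ge> 0" unfolding c_def using pi0 alpha by simp
lemma w_nn: "i < L \<Longrightarrow> w i \<ge> 0" unfolding w_def using w0 .
lemma sum_w: "(\<Sum>i<L. w i) = m" unfolding w_def m_def ..

lemma gfun_eq: "gfun \<alpha> Cm Cs \<pi> \<phi> \<sigma> r L j d = FF d - d"
  unfolding gfun_def FF_def fi_def w_def hj_def m_def ..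

lemma max0_lip: "\<bar>max 0 (a::real) - max 0 b\<bar> \<le> \<bar>a - b\<bar>"
  by (simp add: max_def)

lemma fi_mono: "x \<le> y \<Longrightarrow> fi i y \<le> fi i x"
proof -
  assume xy: "x \<le> y"
  have "\<pi> * \<alpha> * (x - sqrt \<alpha> * hj j) \<le> \<pi> * \<alpha> * (y - sqrt \<alpha> * hj j)"
    using pi0 alpha xy by (intro mult_left_mono) auto
  thus ?thesis unfolding fi_def by (simp add: max_def)
qed

lemma fi_lip: "\<bar>fi i x - fi i y\<bar> \<le> c * \<bar>x - y\<bar>"
proof -
  have "\<bar>fi i x - fi i y\<bar> \<le> \<bar>(sqrt \<alpha> * hj i - \<pi> * \<alpha> * (x - sqrt \<alpha> * hj j)) - (sqrt \<alpha> * hj i - \<pi> * \<alpha> * (y - sqrt \<alpha> * hj j))\<bar>"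
    unfolding fi_def by (rule max0_lip)
  also have "(sqrt \<alpha> * hj i - \<pi> * \<alpha> * (x - sqrt \<alpha> * hj j)) - (sqrt \<alpha> * hj i - \<pi> * \<alpha> * (y - sqrt \<alpha> * hj j)) = c * (y - x)"
    unfolding c_def by (simp add: algebra_simps)
  also have "\<bar>c * (y - x)\<bar> = c * \<bar>x - y\<bar>" using c0 by (simp add: abs_mult abs_minus_commute)
  finally show ?thesis .
qed

lemma fi_nn: "fi i d \<ge> 0" unfolding fi_def by simp

lemma FF_mono: "x \<le> y \<Longrightarrow> FF y \<le> FF x"
proof -
  assume xy: "x \<le> y"
  have "(\<Sum>i<L. w i * fi i y) \<le> (\<Sum>i<L. w i * fi i x)"
  proof (rule sum_mono)
    fix i assume "i \<in> {..<L}"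
    then show "w i * fi i y \<le> w i * fi i x" using w_nn[of i] fi_mono[OF xy, of i] by (intro mult_left_mono) auto
  qed
  thus ?thesis unfolding FF_def using m_pos by (intro mult_left_mono) auto
qed

lemma FF_nn: "FF d \<ge> 0"
  unfolding FF_def using m_pos by (intro mult_nonneg_nonneg sum_nonneg) (auto intro: w_nn fi_nn)

lemma FF_lip: "\<bar>FF x - FF y\<bar> \<le> c * \<bar>x - y\<bar>"
proof -
  have "FF x - FF y = (1/m) * ((\<Sum>i<L. w i * fi i x) - (\<Sum>i<L. w i * fi i y))"
    unfolding FF_def by (simp add: right_diff_distrib)
  also have "\<dots> = (1/m) * (\<Sum>i<L. w i * (fi i x - fi i y))"
    by (simp add: sum_subtractf right_diff_distrib)
  finally have "\<bar>FF x - FF y\<bar> = (1/m) * \<bar>\<Sum>i<L. w i * (fi i x - fi i y)\<bar>"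
    using m_pos by (simp add: abs_mult)
  also have "\<dots> \<le> (1/m) * (\<Sum>i<L. \<bar>w i * (fi i x - fi i y)\<bar>)"
    using m_pos by (intro mult_left_mono sum_abs) auto
  also have "\<dots> \<le> (1/m) * (\<Sum>i<L. w i * (c * \<bar>x - y\<bar>))"
  proof (intro mult_left_mono sum_mono)
    fix i assume "i \<in> {..<L}"
    hence "w i \<ge> 0" using w_nn by simp
    thus "\<bar>w i * (fi i x - fi i y)\<bar> \<le> w i * (c * \<bar>x - y\<bar>)"
      by (simp add: abs_mult mult_left_mono fi_lip)
  qed (use m_pos in simp)
  also have "\<dots> = c * \<bar>x - y\<bar>" using m_pos by (simp add: sum_distrib_right[symmetric] sum_w)
  finally show ?thesis .
qed

lemma FF_cont: "continuous_on UNIV FF"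
  unfolding FF_def fi_def by (intro continuous_intros)

lemma exists_fix: "\<exists>d. FF d = d"
proof -
  have cont: "continuous_on {0 .. FF 0} (\<lambda>d. FF d - d)"
    using FF_cont by (intro continuous_intros) (auto elim: continuous_on_subset)
  have "FF (FF 0) - FF 0 \<le> 0" using FF_mono[OF FF_nn[of 0]] by simp
  moreover have "0 \<le> FF 0 - 0" using FF_nn by simp
  ultimately obtain x where "FF x - x = 0"
    using IVT2'[of "\<lambda>d. FF d - d" "FF 0" 0 0] cont FF_nn by auto
  thus ?thesis by auto
qed

lemma unique_fix: "FF x = x \<Longrightarrow> FF y = y \<Longrightarrow> x = y"
  using FF_mono[of x y] FF_mono[of y x] by (cases "x \<le> y") auto

lemma hj_mono: "i \<le> i' \<Longrightarrow> i' < L \<Longrightarrow> hj i \<le> hj i'"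
proof -
  assume a: "i \<le> i'" "i' < L"
  have "\<phi> i \<le> \<phi> i'" using strict_mono_on_leD[OF phimono, of i i'] a by auto
  thus ?thesis unfolding hj_def hh_def using alpha by (intro divide_right_mono) auto
qed

lemma Nidx_char:
  assumes iL: "i < L"
  shows "Nidx \<alpha> Cm Cs \<pi> \<phi> L j d \<le> i \<longleftrightarrow> hj i > sqrt \<alpha> * \<pi> * (d - sqrt \<alpha> * hj j)"
proof -
  define th where "th = sqrt \<alpha> * \<pi> * (d - sqrt \<alpha> * hj j)"
  define P where "P = (\<lambda>i. i < L \<and> hj i > th)"
  have Nd: "Nidx \<alpha> Cm Cs \<pi> \<phi> L j d = (if \<exists>i<L. hj i > th then (LEAST i. P i) else L)"
    unfolding Nidx_def P_def th_def hj_def ..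
  have "Nidx \<alpha> Cm Cs \<pi> \<phi> L j d \<le> i \<longleftrightarrow> hj i > th"
  proof (cases "\<exists>i<L. hj i > th")
    case True
    have N: "Nidx \<alpha> Cm Cs \<pi> \<phi> L j d = (LEAST i. P i)" using True Nd by simp
    have ex: "\<exists>i. P i" using True unfolding P_def by blast
    have PN: "P (LEAST i. P i)" using ex by (rule LeastI_ex)
    show "Nidx \<alpha> Cm Cs \<pi> \<phi> L j d \<le> i \<longleftrightarrow> hj i > th"
    proof
      assume a: "Nidx \<alpha> Cm Cs \<pi> \<phi> L j d \<le> i"
      have "hj (LEAST i. P i) \<le> hj i" using a N iL by (intro hj_mono) simp_all
      moreover have "hj (LEAST i. P i) > th" using PN unfolding P_def by simp
      ultimately show "hj i > th" by simp
    next
      assume "hj i > th"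
      hence "P i" unfolding P_def using iL by simp
      hence "(LEAST i. P i) \<le> i" by (rule Least_le)
      thus "Nidx \<alpha> Cm Cs \<pi> \<phi> L j d \<le> i" using N by simp
    qed
  next
    case False
    then have "Nidx \<alpha> Cm Cs \<pi> \<phi> L j d = L" using Nd by (simp only: if_False)
    then show "Nidx \<alpha> Cm Cs \<pi> \<phi> L j d \<le> i \<longleftrightarrow> hj i > th" using False iL by auto
  qed
  thus ?thesis unfolding th_def .
qed

lemma fi_pos_iff: "sqrt \<alpha> * hj i - \<pi> * \<alpha> * (d - sqrt \<alpha> * hj j) > 0 \<longleftrightarrow> hj i > sqrt \<alpha> * \<pi> * (d - sqrt \<alpha> * hj j)"
proof -
  have sa: "sqrt \<alpha> > 0" using alpha by simp
  define X where "X = d - sqrt \<alpha> * hj j"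
  have "sqrt \<alpha> * (hj i - sqrt \<alpha> * \<pi> * X) = sqrt \<alpha> * hj i - (sqrt \<alpha> * sqrt \<alpha>) * \<pi> * X"
    by (simp add: algebra_simps)
  also have "\<dots> = sqrt \<alpha> * hj i - \<pi> * \<alpha> * X" using alpha by simp
  finally have "sqrt \<alpha> * hj i - \<pi> * \<alpha> * (d - sqrt \<alpha> * hj j) = sqrt \<alpha> * (hj i - sqrt \<alpha> * \<pi> * (d - sqrt \<alpha> * hj j))"
    unfolding X_def by simp
  thus ?thesis using sa by (simp add: zero_less_mult_iff)
qed

lemma fixed_point_iff: "fixed_point_eq \<alpha> Cm Cs \<pi> \<phi> \<sigma> r L j d \<longleftrightarrow> FF d = d"
proof -
  define N where "N = Nidx \<alpha> Cm Cs \<pi> \<phi> L j d"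
  define T where "T = (\<Sum>i\<in>{N..<L}. w i)"
  define S1 where "S1 = (\<Sum>i\<in>{N..<L}. w i * (hj i + \<pi> * \<alpha> * hj j))"
  have T0: "T \<ge> 0" unfolding T_def by (intro sum_nonneg) (auto intro: w_nn)
  have den: "m + \<pi> * \<alpha> * T > 0" using m_pos T0 pi0 alpha by (simp add: add_pos_nonneg)
  have fi_eq: "fi i d = (if N \<le> i then sqrt \<alpha> * hj i - \<pi> * \<alpha> * (d - sqrt \<alpha> * hj j) else 0)" if "i < L" for i
    unfolding fi_def N_def using Nidx_char[OF that, of d] fi_pos_iff[of i d] by auto
  have "(\<Sum>i<L. w i * fi i d) = (\<Sum>i<L. if N \<le> i then w i * (sqrt \<alpha> * hj i - \<pi> * \<alpha> * (d - sqrt \<alpha> * hj j)) else 0)"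
    by (intro sum.cong) (auto simp: fi_eq)
  also have "\<dots> = (\<Sum>i\<in>{N..<L}. w i * (sqrt \<alpha> * hj i - \<pi> * \<alpha> * (d - sqrt \<alpha> * hj j)))"
    by (simp add: sum.If_cases) (intro sum.cong, auto)
  also have "\<dots> = sqrt \<alpha> * S1 - \<pi> * \<alpha> * d * T"
    unfolding S1_def T_def by (simp add: sum_distrib_left sum_subtractf sum_distrib_right algebra_simps sum.distrib)
  finally have sumeq: "(\<Sum>i<L. w i * fi i d) = sqrt \<alpha> * S1 - \<pi> * \<alpha> * d * T" .
  have fpe: "fixed_point_eq \<alpha> Cm Cs \<pi> \<phi> \<sigma> r L j d \<longleftrightarrow> d = sqrt \<alpha> * S1 / (m + \<pi> * \<alpha> * T)"
    unfolding fixed_point_eq_def Let_def N_def[symmetric] S1_def T_def w_def m_def hj_def ..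
  have "FF d = d \<longleftrightarrow> (1/m) * (sqrt \<alpha> * S1 - \<pi> * \<alpha> * d * T) = d" unfolding FF_def sumeq ..
  also have "\<dots> \<longleftrightarrow> sqrt \<alpha> * S1 - \<pi> * \<alpha> * d * T = m * d" using m_pos by (auto simp: field_simps)
  also have "\<dots> \<longleftrightarrow> d * (m + \<pi> * \<alpha> * T) = sqrt \<alpha> * S1" by (auto simp: algebra_simps)
  also have "\<dots> \<longleftrightarrow> d = sqrt \<alpha> * S1 / (m + \<pi> * \<alpha> * T)" using den by (auto simp: field_simps)
  finally show ?thesis using fpe by simp
qed

end


locale traj = model +
  fixes d0 :: "nat \<Rightarrow> real" and idx rep :: "nat \<Rightarrow> nat" and nz :: "nat \<Rightarrow> real" and B :: real
  assumes idx_lt: "\<And>s. idx s < L" and nzB: "\<And>s. \<bar>nz s\<bar> \<le> B"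
    and hJ: "(\<lambda>t. (\<Sum>s<t. (if rep s = j then 1 else 0) - m) / real t) \<longlonglongrightarrow> 0"
    and hA: "\<And>i. i < L \<Longrightarrow> (\<lambda>t. (\<Sum>s<t. (if idx s = i \<and> rep s = j then 1 else 0) - w i / m * (if rep s = j then 1 else 0)) / real t) \<longlonglongrightarrow> 0"
    and hN: "(\<lambda>t. (\<Sum>s<t. (if rep s = j then 1 else 0) * nz s) / real t) \<longlonglongrightarrow> 0"
begin

definition "Jr s = (if rep s = j then 1 else 0 :: real)" for s
definition "D s = demand \<alpha> Cm Cs \<pi> \<phi> d0 idx rep nz s" for s
definition "Db t = Dbar \<alpha> Cm Cs \<pi> \<phi> d0 idx rep nz j t" for t
definition "C t = (\<Sum>s<t. Jr s)" for t
definition "SD t = (\<Sum>s<t. Jr s * D s)" for t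
definition "Hf = (\<Sum>i<L. \<bar>sqrt \<alpha> * hj i\<bar>) + c * (\<bar>sqrt \<alpha> * hj j\<bar> + \<bar>d0 j\<bar> + B)"
definition "W t = (\<Sum>s<t. Jr s * (D s - FF (Db s)))" for t

lemma B0: "B \<ge> 0" using nzB[of 0] by linarith

lemma Jr01: "Jr s \<ge> 0" "Jr s \<le> 1" unfolding Jr_def by auto

lemma D_eq: "rep s = j \<Longrightarrow> D s = fi (idx s) (Db s) + nz s"
  unfolding D_def Db_def fi_def hj_def by (rule demand_formula[OF alpha]) auto

lemma C_card: "real (card {s. s < t \<and> rep s = j}) = C t"
proof -
  have "{s. s < t \<and> rep s = j} = {s\<in>{..<t}. rep s = j}" by auto
  hence "real (card {s. s < t \<and> rep s = j}) = (\<Sum>s\<in>{s\<in>{..<t}. rep s = j}. 1)" by simp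
  also have "\<dots> = (\<Sum>s<t. if rep s = j then 1 else 0)" by (rule sum.inter_filter) simp
  finally show ?thesis unfolding C_def Jr_def .
qed

lemma SD_sum: "(\<Sum>s\<in>{s. s < t \<and> rep s = j}. D s) = SD t"
proof -
  have "{s. s < t \<and> rep s = j} = {s\<in>{..<t}. rep s = j}" by auto
  hence "(\<Sum>s\<in>{s. s < t \<and> rep s = j}. D s) = (\<Sum>s\<in>{s\<in>{..<t}. rep s = j}. D s)" by simp
  also have "\<dots> = (\<Sum>s<t. if rep s = j then D s else 0)" by (rule sum.inter_filter) simp
  also have "\<dots> = (\<Sum>s<t. Jr s * D s)" unfolding Jr_def by (intro sum.cong) auto
  finally show ?thesis unfolding SD_def .
qed

lemma C_nn: "C t \<ge> 0" unfolding C_def by (intro sum_nonneg) (simp add: Jr01)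

lemma Db_eq: "Db t = (if C t = 0 then d0 j else SD t / C t)"
proof -
  have c0eq: "card {s. s < t \<and> rep s = j} = 0 \<longleftrightarrow> C t = 0" using C_card[of t] by linarith
  show ?thesis unfolding Db_def Dbar_def avg_rep_def Let_def D_def[symmetric]
    using c0eq SD_sum[of t] C_card[of t] by simp
qed

lemma C_Suc: "C (Suc t) = C t + Jr t" unfolding C_def by simp
lemma SD_Suc: "SD (Suc t) = SD t + Jr t * D t" unfolding SD_def by simp

lemma SD_zero: "C t = 0 \<Longrightarrow> SD t = 0"
proof -
  assume "C t = 0"
  hence "\<forall>s\<in>{..<t}. Jr s = 0" unfolding C_def using Jr01 by (subst (asm) sum_nonneg_eq_0_iff) auto
  thus "SD t = 0" unfolding SD_def by simp
qed

lemma Db_step: "rep t = j \<Longrightarrow> C (Suc t) * (Db (Suc t) - Db t) = D t - Db t"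
proof -
  assume rt: "rep t = j"
  have J1: "Jr t = 1" using rt unfolding Jr_def by simp
  have CS: "C (Suc t) = C t + 1" using C_Suc J1 by simp
  have CSp: "C (Suc t) > 0" using CS C_nn[of t] by linarith
  have DbS: "Db (Suc t) = (SD t + D t) / (C t + 1)" using Db_eq[of "Suc t"] CSp CS SD_Suc[of t] J1 by simp
  show ?thesis
  proof (cases "C t = 0")
    case True
    then show ?thesis using DbS CS SD_zero[OF True] Db_eq[of t] by simp
  next
    case False
    hence Cp: "C t > 0" using C_nn[of t] by simp
    have "SD t = C t * Db t" using Db_eq[of t] False by simp
    then show ?thesis using DbS CS Cp by (simp add: field_simps)
  qed
qed

lemma Db_nstep: "rep t \<noteq> j \<Longrightarrow> Db (Suc t) = Db t"
proof -
  assume "rep t \<noteq> j"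
  hence "Jr t = 0" unfolding Jr_def by simp
  thus ?thesis using Db_eq[of t] Db_eq[of "Suc t"] C_Suc[of t] SD_Suc[of t] by simp
qed

lemma D_lb: "rep s = j \<Longrightarrow> D s \<ge> - B"
  using D_eq[of s] fi_nn[of "idx s" "Db s"] nzB[of s] by linarith

lemma SD_lb: "SD t \<ge> - B * C t"
proof -
  have "- B * C t = (\<Sum>s<t. - B * Jr s)" unfolding C_def by (simp add: sum_distrib_left)
  also have "\<dots> \<le> SD t" unfolding SD_def
  proof (rule sum_mono)
    fix s show "- B * Jr s \<le> Jr s * D s" using D_lb[of s] unfolding Jr_def by auto
  qed
  finally show ?thesis .
qed

lemma Db_cases: "Db t = d0 j \<or> Db t \<ge> - B"
proof (cases "C t = 0")
  case True then show ?thesis using Db_eq by simp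
next
  case False
  hence Cp: "C t > 0" using C_nn[of t] by simp
  have "- B \<le> SD t / C t" using SD_lb[of t] Cp by (simp add: field_simps)
  then show ?thesis using Db_eq[of t] False by simp
qed

lemma Hf_nn: "Hf \<ge> 0" unfolding Hf_def using c0 B0 by (intro add_nonneg_nonneg sum_nonneg mult_nonneg_nonneg) auto

lemma fi_ub: "i < L \<Longrightarrow> fi i (Db t) \<le> Hf"
proof -
  assume iL: "i < L"
  let ?d = "Db t"
  have md: "- ?d \<le> \<bar>d0 j\<bar> + B" using Db_cases[of t] B0 by auto
  have "\<bar>sqrt \<alpha> * hj i\<bar> \<le> (\<Sum>i<L. \<bar>sqrt \<alpha> * hj i\<bar>)"
    by (rule member_le_sum[of i "{..<L}" "\<lambda>i. \<bar>sqrt \<alpha> * hj i\<bar>"]) (use iL in auto)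
  hence hi: "sqrt \<alpha> * hj i \<le> (\<Sum>i<L. \<bar>sqrt \<alpha> * hj i\<bar>)" by linarith
  have "sqrt \<alpha> * hj i - \<pi> * \<alpha> * (?d - sqrt \<alpha> * hj j) = sqrt \<alpha> * hj i + c * (sqrt \<alpha> * hj j) + c * (- ?d)"
    unfolding c_def by (simp add: algebra_simps)
  also have "\<dots> \<le> (\<Sum>i<L. \<bar>sqrt \<alpha> * hj i\<bar>) + c * \<bar>sqrt \<alpha> * hj j\<bar> + c * (\<bar>d0 j\<bar> + B)"
    using hi c0 md by (intro add_mono mult_left_mono) auto
  also have "\<dots> = Hf" unfolding Hf_def by (simp add: algebra_simps)
  finally have "sqrt \<alpha> * hj i - \<pi> * \<alpha> * (?d - sqrt \<alpha> * hj j) \<le> Hf" .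
  moreover have "Hf \<ge> 0" by (rule Hf_nn)
  ultimately show ?thesis unfolding fi_def by simp
qed

lemma D_ub: "rep s = j \<Longrightarrow> \<bar>D s\<bar> \<le> Hf + B"
proof -
  assume rs: "rep s = j"
  have a: "D s = fi (idx s) (Db s) + nz s" by (rule D_eq[OF rs])
  have b: "0 \<le> fi (idx s) (Db s)" by (rule fi_nn)
  have c: "fi (idx s) (Db s) \<le> Hf" by (rule fi_ub[OF idx_lt[of s]])
  have d: "-B \<le> nz s \<and> nz s \<le> B" using nzB[of s] by (simp add: abs_le_iff)
  show ?thesis unfolding abs_le_iff using a b c d by linarith
qed

lemma Db_bound: "\<bar>Db t\<bar> \<le> \<bar>d0 j\<bar> + Hf + B"
proof (cases "C t = 0")
  case True then show ?thesis using Db_eq[of t] Hf_nn B0 by simp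
next
  case False
  hence Cp: "C t > 0" using C_nn[of t] by simp
  have "\<bar>SD t\<bar> \<le> (\<Sum>s<t. \<bar>Jr s * D s\<bar>)" unfolding SD_def by (rule sum_abs)
  also have "\<dots> \<le> (\<Sum>s<t. Jr s * (Hf + B))"
  proof (rule sum_mono)
    fix s show "\<bar>Jr s * D s\<bar> \<le> Jr s * (Hf + B)" using D_ub[of s] unfolding Jr_def by auto
  qed
  also have "\<dots> = C t * (Hf + B)" unfolding C_def by (simp add: sum_distrib_right)
  finally have a: "\<bar>SD t\<bar> \<le> C t * (Hf + B)" .
  have "\<bar>SD t / C t\<bar> = \<bar>SD t\<bar> / C t" using Cp by (simp add: abs_divide)
  also have "\<dots> \<le> Hf + B" using a Cp by (subst pos_divide_le_eq[OF Cp]) (simp add: mult.commute)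
  finally have b: "\<bar>SD t / C t\<bar> \<le> Hf + B" .
  have "Db t = SD t / C t" using False by (simp only: Db_eq[of t] if_not_P[OF False] if_False)
  then show ?thesis using b by simp
qed

lemma Ct_lim: "(\<lambda>t. C t / real t) \<longlonglongrightarrow> m"
proof -
  have "(\<lambda>t. (\<Sum>s<t. Jr s - m) / real t + m) \<longlonglongrightarrow> 0 + m"
    using hJ unfolding Jr_def by (intro tendsto_add) auto
  hence lim: "(\<lambda>t. (\<Sum>s<t. Jr s - m) / real t + m) \<longlonglongrightarrow> m" by simp
  moreover have "eventually (\<lambda>t. (\<Sum>s<t. Jr s - m) / real t + m = C t / real t) sequentially"
    using eventually_gt_at_top[of "0::nat"]
  proof eventually_elim
    case (elim t)
    have "(\<Sum>s<t. Jr s - m) = C t - real t * m" unfolding C_def by (simp add: sum_subtractf)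
    hence "(\<Sum>s<t. Jr s - m) / real t + m = C t / real t - real t * m / real t + m" by (simp add: diff_divide_distrib)
    also have "real t * m / real t = m" using elim by simp
    finally show ?case by simp
  qed
  from iffD1[OF tendsto_cong[OF this] lim] show ?thesis .
qed

lemma C_inf: "filterlim C at_top sequentially"
proof -
  have "filterlim (\<lambda>t. C t / real t * real t) at_top sequentially"
    by (rule filterlim_tendsto_pos_mult_at_top[OF Ct_lim m_pos filterlim_real_sequentially])
  moreover have ev: "eventually (\<lambda>t. C t / real t * real t = C t) sequentially"
    using eventually_gt_at_top[of "0::nat"] by eventually_elim simp
  ultimately show ?thesis using iffD1[OF filterlim_cong[OF refl refl ev]] by blast
qed

end


context traj begin

definition "ai i s = (if idx s = i \<and> rep s = j then 1 else 0) - w i / m * Jr s" for i s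

lemma W_point: "Jr s * (D s - FF (Db s)) = (\<Sum>i<L. ai i s * fi i (Db s)) + Jr s * nz s"
proof (cases "rep s = j")
  case True
  define d where "d = Db s"
  have J1: "Jr s = 1" using True unfolding Jr_def by simp
  have e1: "ai i s * fi i d = (if idx s = i then fi i d else 0) - w i / m * fi i d" for i
    unfolding ai_def J1 using True by (simp add: algebra_simps)
  have s1: "(\<Sum>i<L. (if idx s = i then fi i d else 0)) = fi (idx s) d"
    using idx_lt[of s] by (simp add: sum.delta)
  have s2: "(\<Sum>i<L. w i / m * fi i d) = FF d"
    unfolding FF_def by (simp add: sum_distrib_left)
  have "(\<Sum>i<L. ai i s * fi i d) = fi (idx s) d - FF d"
    unfolding e1 sum_subtractf s1 s2 ..
  then show ?thesis using D_eq[OF True] J1 unfolding d_def by simp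
next
  case False
  have J0: "Jr s = 0" using False unfolding Jr_def by simp
  have "ai i s = 0" for i unfolding ai_def J0 using False by simp
  then show ?thesis using J0 by simp
qed

lemma W_decomp: "W t = (\<Sum>i<L. \<Sum>s<t. ai i s * fi i (Db s)) + (\<Sum>s<t. Jr s * nz s)"
proof -
  have "W t = (\<Sum>s<t. (\<Sum>i<L. ai i s * fi i (Db s)) + Jr s * nz s)"
    unfolding W_def by (intro sum.cong refl W_point)
  also have "\<dots> = (\<Sum>s<t. \<Sum>i<L. ai i s * fi i (Db s)) + (\<Sum>s<t. Jr s * nz s)"
    by (rule sum.distrib)
  also have "(\<Sum>s<t. \<Sum>i<L. ai i s * fi i (Db s)) = (\<Sum>i<L. \<Sum>s<t. ai i s * fi i (Db s))"
    by (rule sum.swap)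
  finally show ?thesis .
qed

definition "Mx = \<bar>d0 j\<bar> + 2 * (Hf + B)"

lemma Db_diff: "\<bar>Db (Suc s) - Db s\<bar> * C (Suc s) \<le> Mx"
proof (cases "rep s = j")
  case True
  have "\<bar>Db (Suc s) - Db s\<bar> * C (Suc s) = \<bar>C (Suc s) * (Db (Suc s) - Db s)\<bar>"
    using C_nn[of "Suc s"] by (simp add: abs_mult)
  also have "\<dots> = \<bar>D s - Db s\<bar>" using Db_step[OF True] by simp
  also have "\<dots> \<le> \<bar>D s\<bar> + \<bar>Db s\<bar>" by (rule abs_triangle_ineq4)
  also have "\<dots> \<le> (Hf + B) + (\<bar>d0 j\<bar> + Hf + B)" using D_ub[OF True] Db_bound[of s] by (rule add_mono)
  also have "\<dots> = Mx" unfolding Mx_def by simp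
  finally show ?thesis .
next
  case False
  have "Mx \<ge> 0" unfolding Mx_def using Hf_nn B0 by simp
  then show ?thesis using Db_nstep[OF False] by simp
qed

lemma sum_ai_lim: "i < L \<Longrightarrow> (\<lambda>t. (\<Sum>s<t. ai i s * fi i (Db s)) / real t) \<longlonglongrightarrow> 0"
proof -
  assume iL: "i < L"
  define K where "K = c * Mx * (2 / m)"
  have A: "(\<lambda>t. (\<Sum>s<t. ai i s) / real t) \<longlonglongrightarrow> 0"
    using hA[OF iL] unfolding ai_def Jr_def .
  have G: "\<bar>fi i (Db s)\<bar> \<le> Hf" for s using fi_nn[of i "Db s"] fi_ub[OF iL, of s] by simp
  have lim1: "(\<lambda>s. C (Suc s) / real (Suc s)) \<longlonglongrightarrow> m"
    using LIMSEQ_Suc[OF Ct_lim] .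
  have ev: "eventually (\<lambda>s. m / 2 < C (Suc s) / real (Suc s)) sequentially"
  proof -
    have "m / 2 < m" using m_pos by simp
    from order_tendstoD(1)[OF lim1 this] show ?thesis .
  qed
  have Dc: "eventually (\<lambda>s. real (Suc s) * \<bar>fi i (Db (Suc s)) - fi i (Db s)\<bar> \<le> K) sequentially"
    using ev
  proof eventually_elim
    case (elim s)
    define q where "q = C (Suc s) / real (Suc s)"
    have q: "q > m / 2" using elim unfolding q_def .
    have qpos: "q > 0" using q m_pos by linarith
    have Cpos: "C (Suc s) > 0" using qpos unfolding q_def by (simp add: zero_less_divide_iff)
    have Cq: "C (Suc s) = q * real (Suc s)" unfolding q_def by simp
    have Mx0: "Mx \<ge> 0" unfolding Mx_def using Hf_nn B0 by simp
    have "real (Suc s) * \<bar>fi i (Db (Suc s)) - fi i (Db s)\<bar> \<le> real (Suc s) * (c * \<bar>Db (Suc s) - Db s\<bar>)"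
      by (intro mult_left_mono fi_lip) simp
    also have "\<dots> = c * (\<bar>Db (Suc s) - Db s\<bar> * C (Suc s)) / q"
      using qpos unfolding Cq by (simp add: field_simps)
    also have "\<dots> \<le> c * Mx / q"
      using c0 qpos Db_diff[of s] by (intro divide_right_mono mult_left_mono) auto
    also have "\<dots> \<le> c * Mx / (m / 2)"
      using c0 Mx0 q m_pos by (intro divide_left_mono mult_nonneg_nonneg) auto
    also have "\<dots> = K" unfolding K_def by simp
    finally show ?case .
  qed
  show ?thesis by (rule abel_o[OF A G Dc])
qed

lemma W_lim: "(\<lambda>t. W t / real t) \<longlonglongrightarrow> 0"
proof -
  have "(\<lambda>t. (\<Sum>i<L. (\<Sum>s<t. ai i s * fi i (Db s)) / real t) + (\<Sum>s<t. Jr s * nz s) / real t) \<longlonglongrightarrow> 0 + 0"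
    using hN unfolding Jr_def[symmetric]
    by (intro tendsto_add tendsto_null_sum sum_ai_lim) auto
  moreover have "(\<Sum>i<L. (\<Sum>s<t. ai i s * fi i (Db s)) / real t) + (\<Sum>s<t. Jr s * nz s) / real t = W t / real t" for t
    unfolding W_decomp by (simp add: add_divide_distrib sum_divide_distrib)
  ultimately show ?thesis by simp
qed

lemma Wo: "(\<lambda>t. W t / C t) \<longlonglongrightarrow> 0"
proof -
  have "(\<lambda>t. (W t / real t) / (C t / real t)) \<longlonglongrightarrow> 0 / m"
    using m_pos by (intro tendsto_divide W_lim Ct_lim) auto
  hence lim: "(\<lambda>t. (W t / real t) / (C t / real t)) \<longlonglongrightarrow> 0" by simp
  have ev: "eventually (\<lambda>t. (W t / real t) / (C t / real t) = W t / C t) sequentially"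
    using eventually_gt_at_top[of "0::nat"]
  proof eventually_elim
    case (elim t)
    show ?case
    proof (cases "C t = 0")
      case True then show ?thesis by simp
    next
      case False then show ?thesis using elim by (simp add: field_simps)
    qed
  qed
  from iffD1[OF tendsto_cong[OF ev] lim] show ?thesis .
qed

lemma Db_conv: "FF ds = ds \<Longrightarrow> Db \<longlonglongrightarrow> ds"
proof -
  assume fx: "FF ds = ds"
  show ?thesis
  proof (rule det_core[where J = "\<lambda>t. rep t = j" and C = C and Y = D and W = W and F = FF and c = c])
    fix t assume "rep t = j"
    thus "C (Suc t) = C t + 1" using C_Suc[of t] unfolding Jr_def by simp
  next
    fix t assume "rep t \<noteq> j"
    thus "C (Suc t) = C t" using C_Suc[of t] unfolding Jr_def by simp
  next
    fix t assume rt: "rep t = j" and "C t > 0"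
    have "C (Suc t) * (Db (Suc t) - Db t) = D t - Db t" by (rule Db_step[OF rt])
    moreover have "C (Suc t) = C t + 1" using C_Suc[of t] rt unfolding Jr_def by simp
    ultimately show "C (Suc t) * Db (Suc t) = C t * Db t + D t" by (simp add: algebra_simps)
  next
    fix t assume "rep t \<noteq> j"
    thus "Db (Suc t) = Db t" by (rule Db_nstep)
  next
    fix t assume "rep t = j"
    thus "W (Suc t) = W t + (D t - FF (Db t))" unfolding W_def Jr_def by simp
  next
    fix t assume "rep t \<noteq> j"
    thus "W (Suc t) = W t" unfolding W_def Jr_def by simp
  qed (use C_inf Wo FF_mono FF_lip c0 fx in auto)
qed

end


lemma interp_sq:
  fixes x :: "nat \<Rightarrow> real"
  assumes xb: "\<And>s. \<bar>x s\<bar> \<le> B"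
    and lim: "(\<lambda>k. (\<Sum>s<k^2. x s) / real (k^2)) \<longlonglongrightarrow> 0"
  shows "(\<lambda>n. (\<Sum>s<n. x s) / real n) \<longlonglongrightarrow> 0"
proof (rule LIMSEQ_I)
  fix e :: real assume e: "e > 0"
  have B0: "B \<ge> 0" using xb[of 0] by linarith
  from LIMSEQ_D[OF lim, of "e/2"] e obtain K where
    K: "\<And>k. k \<ge> K \<Longrightarrow> \<bar>(\<Sum>s<k^2. x s) / real (k^2)\<bar> < e/2" by auto
  obtain N2 :: nat where N2: "real N2 > (8 * B / e)^2" using reals_Archimedean2 by blast
  define N where "N = max (Suc (Suc K)^2) (Suc N2)"
  show "\<exists>no. \<forall>n\<ge>no. norm ((\<Sum>s<n. x s) / real n - 0) < e"
  proof (intro exI allI impI)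
    fix n assume nN: "n \<ge> N"
    define q where "q = nat \<lfloor>sqrt (real n)\<rfloor>"
    have sq0: "sqrt (real n) \<ge> 0" by simp
    have q1: "real q \<le> sqrt (real n)" unfolding q_def using sq0 by simp
    have q2: "sqrt (real n) < real q + 1" unfolding q_def using sq0 by linarith
    have qsq: "real (q^2) \<le> real n"
    proof -
      have "real (q^2) = (real q)^2" by simp
      also have "\<dots> \<le> (sqrt (real n))^2" using q1 by (intro power_mono) auto
      also have "\<dots> = real n" by simp
      finally show ?thesis .
    qed
    hence qn: "q^2 \<le> n" by linarith
    have nq: "real n < (real q + 1)^2"
    proof -
      have "real n = (sqrt (real n))^2" by simp
      also have "\<dots> < (real q + 1)^2" using q2 sq0 by (intro power_strict_mono) auto
      finally show ?thesis .
    qed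
    have "real n < real ((q + 1)^2)" using nq by (simp add: add.commute)
    hence "n < (q + 1)^2" by (simp only: of_nat_less_iff)
    hence "n \<le> q^2 + 2 * q" by (simp add: power2_eq_square algebra_simps)
    hence gap: "real n - real (q^2) \<le> 2 * real q" by linarith
    have "(Suc (Suc K))^2 \<le> n" using nN unfolding N_def by simp
    hence "real ((Suc (Suc K))^2) \<le> real n" by (simp only: of_nat_le_iff)
    hence nK: "real n \<ge> (real (Suc (Suc K)))^2" by (simp only: of_nat_power)
    have sK: "sqrt (real n) \<ge> real (Suc (Suc K))"
      using nK by (metis abs_of_nat real_sqrt_abs real_sqrt_le_mono)
    hence qK: "q \<ge> K" using q2 by linarith
    have npos: "real n > 0" using nN unfolding N_def by simp
    have qpos: "q > 0" using qK q2 sK by linarith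
    have split: "(\<Sum>s<n. x s) = (\<Sum>s<q^2. x s) + (\<Sum>s\<in>{q^2..<n}. x s)"
      using qn by (metis atLeast0LessThan le0 sum.atLeastLessThan_concat)
    have t1: "\<bar>\<Sum>s<q^2. x s\<bar> \<le> e/2 * real (q^2)"
    proof -
      have "\<bar>(\<Sum>s<q^2. x s) / real (q^2)\<bar> < e/2" using K[OF qK] .
      moreover have "real (q^2) > 0" using qpos by simp
      ultimately show ?thesis by (simp add: abs_divide divide_less_eq less_imp_le mult.commute)
    qed
    have t2: "\<bar>\<Sum>s\<in>{q^2..<n}. x s\<bar> \<le> B * (real n - real (q^2))"
    proof -
      have "\<bar>\<Sum>s\<in>{q^2..<n}. x s\<bar> \<le> (\<Sum>s\<in>{q^2..<n}. \<bar>x s\<bar>)" by (rule sum_abs)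
      also have "\<dots> \<le> (\<Sum>s\<in>{q^2..<n}. B)" using xb by (intro sum_mono) auto
      also have "\<dots> = B * (real n - real (q^2))" using qn by (simp add: of_nat_diff)
      finally show ?thesis .
    qed
    have "\<bar>\<Sum>s<n. x s\<bar> \<le> \<bar>\<Sum>s<q^2. x s\<bar> + \<bar>\<Sum>s\<in>{q^2..<n}. x s\<bar>"
      unfolding split by (rule abs_triangle_ineq)
    hence "\<bar>\<Sum>s<n. x s\<bar> \<le> e/2 * real (q^2) + B * (real n - real (q^2))"
      using t1 t2 by linarith
    also have "\<dots> \<le> e/2 * real n + B * (2 * real q)"
      using qsq gap e B0 by (intro add_mono mult_left_mono) auto
    also have "B * (2 * real q) \<le> B * (2 * sqrt (real n))" using q1 B0 by (intro mult_left_mono) auto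
    also have "B * (2 * sqrt (real n)) \<le> e/4 * real n"
    proof -
      have nN2: "real n > (8 * B / e)^2" using nN N2 unfolding N_def by simp
      have "8 * B / e \<le> sqrt (real n)"
      proof -
        have "8 * B / e \<ge> 0" using B0 e by simp
        hence "8 * B / e = sqrt ((8 * B / e)^2)" by (simp only: real_sqrt_abs abs_of_nonneg)
        also have "\<dots> \<le> sqrt (real n)" using nN2 by (intro real_sqrt_le_mono) simp
        finally show ?thesis .
      qed
      hence "8 * B \<le> e * sqrt (real n)" using e by (simp add: divide_le_eq mult.commute)
      hence "8 * B * sqrt (real n) \<le> e * sqrt (real n) * sqrt (real n)"
        using mult_right_mono[OF _ sq0] by blast
      hence "B * (2 * sqrt (real n)) \<le> e / 4 * (sqrt (real n) * sqrt (real n))"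
        by (simp only: mult.assoc)
      also have "sqrt (real n) * sqrt (real n) = real n" by simp
      finally show ?thesis .
    qed
    finally have "\<bar>\<Sum>s<n. x s\<bar> \<le> 3/4 * e * real n" by simp
    also have "\<dots> < e * real n" using e npos by simp
    finally show "norm ((\<Sum>s<n. x s) / real n - 0) < e" using npos by (simp add: abs_divide divide_less_eq)
  qed
qed


lemma (in prob_space) slln_uncorr:
  fixes X :: "nat \<Rightarrow> 'a \<Rightarrow> real"
  assumes meas[measurable]: "\<And>s. X s \<in> borel_measurable M"
    and bnd: "\<And>s. AE \<omega> in M. \<bar>X s \<omega>\<bar> \<le> B"
    and unc: "\<And>a b. a \<noteq> b \<Longrightarrow> expectation (\<lambda>\<omega>. X a \<omega> * X b \<omega>) = 0"
  shows "AE \<omega> in M. (\<lambda>t. (\<Sum>s<t. X s \<omega>) / real t) \<longlonglongrightarrow> 0"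
proof -
  have XX: "AE \<omega> in M. \<bar>X a \<omega> * X b \<omega>\<bar> \<le> B * B" for a b
    using bnd[of a] bnd[of b]
  proof eventually_elim
    case (elim \<omega>)
    have "\<bar>X a \<omega> * X b \<omega>\<bar> = \<bar>X a \<omega>\<bar> * \<bar>X b \<omega>\<bar>" by (simp add: abs_mult)
    also have "\<dots> \<le> B * B" using elim by (intro mult_mono) auto
    finally show ?case .
  qed
  have intp: "integrable M (\<lambda>\<omega>. X a \<omega> * X b \<omega>)" for a b
    by (rule integrable_const_bound[where B="B*B"]) (use XX[of a b] in simp_all)
  define S where "S n \<omega> = (\<Sum>s<n. X s \<omega>)" for n \<omega>
  have S2: "(S n \<omega>)^2 = (\<Sum>a<n. \<Sum>b<n. X a \<omega> * X b \<omega>)" for n \<omega>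
    unfolding S_def power2_eq_square sum_product ..
  have intS2: "integrable M (\<lambda>\<omega>. (S n \<omega>)^2)" for n
    unfolding S2 by (simp add: intp)
  have ES2: "expectation (\<lambda>\<omega>. (S n \<omega>)^2) \<le> real n * B^2" for n
  proof -
    have "expectation (\<lambda>\<omega>. (S n \<omega>)^2) = (\<Sum>a<n. \<Sum>b<n. expectation (\<lambda>\<omega>. X a \<omega> * X b \<omega>))"
      unfolding S2 by (simp add: integrable_sum intp)
    also have "\<dots> = (\<Sum>a<n. expectation (\<lambda>\<omega>. X a \<omega> * X a \<omega>))"
    proof (rule sum.cong[OF refl])
      fix a assume a: "a \<in> {..<n}"
      have "(\<Sum>b<n. expectation (\<lambda>\<omega>. X a \<omega> * X b \<omega>)) = (\<Sum>b<n. if b = a then expectation (\<lambda>\<omega>. X a \<omega> * X a \<omega>) else 0)"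
        using unc by (intro sum.cong) auto
      also have "\<dots> = expectation (\<lambda>\<omega>. X a \<omega> * X a \<omega>)" using a by simp
      finally show "(\<Sum>b<n. expectation (\<lambda>\<omega>. X a \<omega> * X b \<omega>)) = expectation (\<lambda>\<omega>. X a \<omega> * X a \<omega>)" .
    qed
    also have "\<dots> \<le> (\<Sum>a<n. B^2)"
    proof (rule sum_mono)
      fix a
      have "expectation (\<lambda>\<omega>. X a \<omega> * X a \<omega>) \<le> expectation (\<lambda>\<omega>. B^2)"
      proof (rule integral_mono_AE)
        show "integrable M (\<lambda>\<omega>. X a \<omega> * X a \<omega>)" by (rule intp)
        show "integrable M (\<lambda>\<omega>. B^2)" by simp
        show "AE \<omega> in M. X a \<omega> * X a \<omega> \<le> B^2"
          using XX[of a a] by eventually_elim (simp add: power2_eq_square)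
      qed
      also have "\<dots> = B^2" by (simp add: prob_space)
      finally show "expectation (\<lambda>\<omega>. X a \<omega> * X a \<omega>) \<le> B^2" .
    qed
    also have "\<dots> = real n * B^2" by simp
    finally show ?thesis .
  qed
  define Z where "Z k \<omega> = (S (k^2) \<omega>)^2 / (real (k^2))^2" for k \<omega>
  have Zm[measurable]: "Z k \<in> borel_measurable M" for k unfolding Z_def S_def by measurable
  have Zint: "integrable M (Z k)" for k
    unfolding Z_def by (intro integrable_divide intS2)
  have Znn: "Z k \<omega> \<ge> 0" for k \<omega> unfolding Z_def by simp
  have EZnn: "expectation (Z k) \<ge> 0" for k by (rule integral_nonneg_AE) (simp add: Znn)
  have EZ: "expectation (Z k) \<le> B^2 * inverse (real k ^ 2)" for k
  proof (cases "k = 0")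
    case True then show ?thesis unfolding Z_def by simp
  next
    case False
    have kp: "real k > 0" using False by simp
    have "expectation (Z k) = expectation (\<lambda>\<omega>. (S (k^2) \<omega>)^2) / (real (k^2))^2"
      unfolding Z_def by simp
    also have "\<dots> \<le> (real (k^2) * B^2) / (real (k^2))^2"
      using kp by (intro divide_right_mono ES2) simp
    also have "\<dots> = B^2 * inverse (real k ^ 2)" using kp by (simp add: field_simps power2_eq_square)
    finally show ?thesis .
  qed
  have summ: "summable (\<lambda>k. expectation (Z k))"
  proof (rule summable_comparison_test')
    show "summable (\<lambda>k. B^2 * inverse (real k ^ 2))"
      by (intro summable_mult inverse_power_summable) simp
    show "norm (expectation (Z k)) \<le> B^2 * inverse (real k ^ 2)" if "k \<ge> 0" for k
      using EZ[of k] EZnn[of k] by simp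
  qed
  have nn: "(\<integral>\<^sup>+\<omega>. (\<Sum>k. ennreal (Z k \<omega>)) \<partial>M) \<noteq> \<infinity>"
  proof -
    have "(\<integral>\<^sup>+\<omega>. (\<Sum>k. ennreal (Z k \<omega>)) \<partial>M) = (\<Sum>k. \<integral>\<^sup>+\<omega>. ennreal (Z k \<omega>) \<partial>M)"
      by (rule nn_integral_suminf) measurable
    also have "\<dots> = (\<Sum>k. ennreal (expectation (Z k)))"
      by (intro suminf_cong nn_integral_eq_integral Zint) (simp add: Znn)
    also have "\<dots> = ennreal (\<Sum>k. expectation (Z k))"
      by (rule suminf_ennreal2[OF EZnn summ])
    finally show ?thesis by simp
  qed
  have AEf: "AE \<omega> in M. (\<Sum>k. ennreal (Z k \<omega>)) \<noteq> \<infinity>"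
    by (rule nn_integral_PInf_AE[OF _ nn]) measurable
  have AEb: "AE \<omega> in M. \<forall>s. \<bar>X s \<omega>\<bar> \<le> B" using bnd by (simp add: AE_all_countable)
  show ?thesis using AEf AEb
  proof eventually_elim
    case (elim \<omega>)
    have "summable (\<lambda>k. Z k \<omega>)" by (rule summable_suminf_not_top) (use Znn elim in auto)
    hence "(\<lambda>k. Z k \<omega>) \<longlonglongrightarrow> 0" by (rule summable_LIMSEQ_zero)
    hence "(\<lambda>k. sqrt (Z k \<omega>)) \<longlonglongrightarrow> sqrt 0" by (rule tendsto_real_sqrt)
    moreover have "sqrt (Z k \<omega>) = \<bar>S (k^2) \<omega> / real (k^2)\<bar>" for k
    proof -
      have "Z k \<omega> = (S (k^2) \<omega> / real (k^2))^2" unfolding Z_def by (simp only: power_divide)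
      thus ?thesis by (simp only: real_sqrt_abs)
    qed
    ultimately have "(\<lambda>k. \<bar>S (k^2) \<omega> / real (k^2)\<bar>) \<longlonglongrightarrow> 0" by simp
    hence "(\<lambda>k. S (k^2) \<omega> / real (k^2)) \<longlonglongrightarrow> 0" by (rule tendsto_rabs_zero_cancel)
    hence lk: "(\<lambda>k. (\<Sum>s<k^2. X s \<omega>) / real (k^2)) \<longlonglongrightarrow> 0" unfolding S_def .
    show ?case by (rule interp_sq[of "\<lambda>s. X s \<omega>" B, OF _ lk]) (use elim in auto)
  qed
qed


context prob_space begin

lemma pair_AE_lt:
  fixes I R :: "nat \<Rightarrow> 'a \<Rightarrow> nat" and \<sigma> :: "nat \<Rightarrow> real" and r :: "nat \<Rightarrow> nat \<Rightarrow> real"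
  assumes Im[measurable]: "\<And>t. I t \<in> measurable M (count_space UNIV)"
    and Rm[measurable]: "\<And>t. R t \<in> measurable M (count_space UNIV)"
    and pd: "\<And>t i k. i < L \<Longrightarrow> k < L \<Longrightarrow> prob {\<omega>\<in>space M. I t \<omega> = i \<and> R t \<omega> = k} = \<sigma> i * r i k"
    and ss: "(\<Sum>i<L. \<sigma> i) = 1" and rs: "\<And>i. i < L \<Longrightarrow> (\<Sum>k<L. r i k) = 1"
  shows "AE \<omega> in M. \<forall>t. I t \<omega> < L \<and> R t \<omega> < L"
proof -
  have one: "AE \<omega> in M. I t \<omega> < L \<and> R t \<omega> < L" for t
  proof -
    define E where "E p = {\<omega>\<in>space M. I t \<omega> = fst p \<and> R t \<omega> = snd p}" for p
    define A where "A = {\<omega>\<in>space M. I t \<omega> < L \<and> R t \<omega> < L}"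
    have Ev: "E p \<in> events" for p unfolding E_def by measurable
    have Aev: "A \<in> events" unfolding A_def by measurable
    have AU: "A = (\<Union>p\<in>{..<L}\<times>{..<L}. E p)" unfolding A_def E_def by auto
    have "prob A = (\<Sum>p\<in>{..<L}\<times>{..<L}. prob (E p))"
      unfolding AU
    proof (rule measure_finite_Union)
      show "disjoint_family_on E ({..<L}\<times>{..<L})"
        unfolding disjoint_family_on_def E_def by auto
    qed (auto simp: Ev)
    also have "\<dots> = (\<Sum>p\<in>{..<L}\<times>{..<L}. \<sigma> (fst p) * r (fst p) (snd p))"
      by (intro sum.cong refl) (auto simp: E_def pd)
    also have "\<dots> = (\<Sum>i<L. \<Sum>k<L. \<sigma> i * r i k)"
      by (simp add: sum.cartesian_product case_prod_beta)
    also have "\<dots> = (\<Sum>i<L. \<sigma> i)"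
      by (intro sum.cong refl) (simp add: sum_distrib_left[symmetric] rs)
    also have "\<dots> = 1" by (rule ss)
    finally have "prob A = 1" .
    hence "AE \<omega> in M. \<omega> \<in> A" using AE_in_set_eq_1[OF Aev] by simp
    thus ?thesis unfolding A_def by eventually_elim simp
  qed
  thus ?thesis by (simp add: AE_all_countable)
qed

lemma pair_expect:
  fixes I R :: "nat \<Rightarrow> 'a \<Rightarrow> nat" and \<sigma> :: "nat \<Rightarrow> real" and r :: "nat \<Rightarrow> nat \<Rightarrow> real"
    and h :: "nat \<Rightarrow> nat \<Rightarrow> real"
  assumes Im[measurable]: "\<And>t. I t \<in> measurable M (count_space UNIV)"
    and Rm[measurable]: "\<And>t. R t \<in> measurable M (count_space UNIV)"
    and pd: "\<And>t i k. i < L \<Longrightarrow> k < L \<Longrightarrow> prob {\<omega>\<in>space M. I t \<omega> = i \<and> R t \<omega> = k} = \<sigma> i * r i k"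
    and AEL: "AE \<omega> in M. \<forall>t. I t \<omega> < L \<and> R t \<omega> < L"
  shows "expectation (\<lambda>\<omega>. h (I t \<omega>) (R t \<omega>)) = (\<Sum>i<L. \<Sum>k<L. h i k * (\<sigma> i * r i k))"
proof -
  define E where "E i k = {\<omega>\<in>space M. I t \<omega> = i \<and> R t \<omega> = k}" for i k
  have Ev: "E i k \<in> events" for i k unfolding E_def by measurable
  have pt: "h a b = (\<Sum>i<L. \<Sum>k<L. (if a = i \<and> b = k then h i k else 0))" if "a < L" "b < L" for a b
  proof -
    have inner: "(\<Sum>k<L. (if a = i \<and> b = k then h i k else 0)) = (if a = i then h i b else 0)" for i
    proof (cases "a = i")
      case True then show ?thesis using that by (simp add: sum.delta')
    next
      case False then show ?thesis by simp
    qed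
    show ?thesis unfolding inner using that by (simp add: sum.delta')
  qed
  have ae: "AE \<omega> in M. h (I t \<omega>) (R t \<omega>) = (\<Sum>i<L. \<Sum>k<L. h i k * indicator (E i k) \<omega>)"
    using AEL AE_space
  proof eventually_elim
    case (elim \<omega>)
    have "h i k * indicator (E i k) \<omega> = (if I t \<omega> = i \<and> R t \<omega> = k then h i k else 0)" for i k
      using elim unfolding E_def by (simp add: indicator_def)
    then show ?case using pt[of "I t \<omega>" "R t \<omega>"] elim by simp
  qed
  have "expectation (\<lambda>\<omega>. h (I t \<omega>) (R t \<omega>)) = expectation (\<lambda>\<omega>. \<Sum>i<L. \<Sum>k<L. h i k * indicator (E i k) \<omega>)"
  proof (rule integral_cong_AE[OF _ _ ae])
    show "(\<lambda>\<omega>. h (I t \<omega>) (R t \<omega>)) \<in> borel_measurable M" by measurable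
    show "(\<lambda>\<omega>. \<Sum>i<L. \<Sum>k<L. h i k * indicator (E i k) \<omega>) \<in> borel_measurable M"
      using Ev by measurable
  qed
  also have "\<dots> = (\<Sum>i<L. \<Sum>k<L. h i k * prob (E i k))"
  proof -
    have int1: "integrable M (\<lambda>\<omega>. h i k * indicator (E i k) \<omega>)" for i k
      by (intro integrable_mult_right integrable_real_indicator Ev) (simp add: less_top[symmetric])
    have e1: "expectation (\<lambda>\<omega>. h i k * indicator (E i k) \<omega>) = h i k * prob (E i k)" for i k
    proof -
      have "E i k \<inter> space M = E i k" unfolding E_def by auto
      thus ?thesis by simp
    qed
    have "expectation (\<lambda>\<omega>. \<Sum>i<L. \<Sum>k<L. h i k * indicator (E i k) \<omega>) = (\<Sum>i<L. expectation (\<lambda>\<omega>. \<Sum>k<L. h i k * indicator (E i k) \<omega>))"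
      by (rule Bochner_Integration.integral_sum) (rule Bochner_Integration.integrable_sum, rule int1)
    also have "\<dots> = (\<Sum>i<L. \<Sum>k<L. expectation (\<lambda>\<omega>. h i k * indicator (E i k) \<omega>))"
      by (intro sum.cong refl Bochner_Integration.integral_sum int1)
    also have "\<dots> = (\<Sum>i<L. \<Sum>k<L. h i k * prob (E i k))" by (simp only: e1)
    finally show ?thesis .
  qed
  also have "\<dots> = (\<Sum>i<L. \<Sum>k<L. h i k * (\<sigma> i * r i k))"
    by (intro sum.cong refl) (simp add: E_def pd)
  finally show ?thesis .
qed

lemma pair_indep_prod:
  fixes I R :: "nat \<Rightarrow> 'a \<Rightarrow> nat" and h :: "nat \<times> nat \<Rightarrow> real"
  assumes Im[measurable]: "\<And>t. I t \<in> measurable M (count_space UNIV)"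
    and Rm[measurable]: "\<And>t. R t \<in> measurable M (count_space UNIV)"
    and pind: "indep_vars (\<lambda>_. count_space UNIV) (\<lambda>t \<omega>. (I t \<omega>, R t \<omega>)) UNIV"
    and hb: "\<And>p. \<bar>h p\<bar> \<le> H" and ab: "a \<noteq> b"
  shows "expectation (\<lambda>\<omega>. h (I a \<omega>, R a \<omega>) * h (I b \<omega>, R b \<omega>)) =
         expectation (\<lambda>\<omega>. h (I a \<omega>, R a \<omega>)) * expectation (\<lambda>\<omega>. h (I b \<omega>, R b \<omega>))"
proof -
  have ind: "indep_vars (\<lambda>_. borel) (\<lambda>t \<omega>. h (I t \<omega>, R t \<omega>)) {a, b}"
    by (rule indep_vars_compose2[OF indep_vars_subset[OF pind]]) auto
  have int: "integrable M (\<lambda>\<omega>. h (I t \<omega>, R t \<omega>))" for t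
    by (rule integrable_const_bound[where B=H]) (use hb in auto)
  have "expectation (\<lambda>\<omega>. \<Prod>t\<in>{a,b}. h (I t \<omega>, R t \<omega>)) = (\<Prod>t\<in>{a,b}. expectation (\<lambda>\<omega>. h (I t \<omega>, R t \<omega>)))"
    by (rule indep_vars_lebesgue_integral[OF _ ind]) (auto intro: int)
  thus ?thesis using ab by simp
qed

end


context prob_space begin

lemma indep_set_mono:
  assumes "indep_set A B" "A' \<subseteq> A" "B' \<subseteq> B"
  shows "indep_set A' B'"
  using assms unfolding indep_sets2_eq by blast

lemma noise_uncorr:
  fixes I R :: "nat \<Rightarrow> 'a \<Rightarrow> nat" and Nz :: "nat \<Rightarrow> 'a \<Rightarrow> real"
  assumes Im[measurable]: "\<And>t. I t \<in> measurable M (count_space UNIV)"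
    and Rm[measurable]: "\<And>t. R t \<in> measurable M (count_space UNIV)"
    and Nm[measurable]: "\<And>t. Nz t \<in> borel_measurable M"
    and famind: "indep_set
          (sigma_sets (space M) {{\<omega> \<in> space M. I t \<omega> = i \<and> R t \<omega> = k} | t i k. True})
          (sigma_sets (space M) {{\<omega> \<in> space M. Nz t \<omega> \<in> B} | t B. B \<in> sets borel})"
    and nind: "indep_vars (\<lambda>_. borel) Nz UNIV"
    and nmean: "\<And>t. expectation (Nz t) = 0"
    and nb: "\<And>t. AE \<omega> in M. \<bar>Nz t \<omega>\<bar> \<le> BN"
    and ab: "a \<noteq> b"
  shows "expectation (\<lambda>\<omega>. ((if R a \<omega> = j then 1 else 0) * Nz a \<omega>) * ((if R b \<omega> = j then 1 else 0) * Nz b \<omega>)) = 0"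
proof -
  define G1 where "G1 = {{\<omega> \<in> space M. I t \<omega> = i \<and> R t \<omega> = k} | t i k. True}"
  define G2 where "G2 = {{\<omega> \<in> space M. Nz t \<omega> \<in> B} | t B. B \<in> sets (borel :: real measure)}"
  have G1p: "G1 \<subseteq> Pow (space M)" unfolding G1_def by auto
  have G2p: "G2 \<subseteq> Pow (space M)" unfolding G2_def by auto
  define N1 where "N1 = sigma (space M) G1"
  define N2 where "N2 = sigma (space M) G2"
  have sN1: "sets N1 = sigma_sets (space M) G1" unfolding N1_def by (rule sets_measure_of[OF G1p])
  have spN1: "space N1 = space M" unfolding N1_def by (rule space_measure_of[OF G1p])
  have sN2: "sets N2 = sigma_sets (space M) G2" unfolding N2_def by (rule sets_measure_of[OF G2p])
  have spN2: "space N2 = space M" unfolding N2_def by (rule space_measure_of[OF G2p])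
  have R1[measurable]: "R t \<in> measurable N1 (count_space UNIV)" for t
    unfolding measurable_count_space_eq2_countable
  proof (intro conjI ballI)
    show "R t \<in> space N1 \<rightarrow> UNIV" by simp
    fix k :: nat
    have "R t -` {k} \<inter> space N1 = (\<Union>i. {\<omega> \<in> space M. I t \<omega> = i \<and> R t \<omega> = k})" unfolding spN1 by auto
    also have "\<dots> \<in> sigma_sets (space M) G1"
    proof (rule sigma_sets.Union)
      fix i show "{\<omega> \<in> space M. I t \<omega> = i \<and> R t \<omega> = k} \<in> sigma_sets (space M) G1"
        by (rule sigma_sets.Basic) (auto simp: G1_def)
    qed
    finally show "R t -` {k} \<inter> space N1 \<in> sets N1" unfolding sN1 .
  qed
  have Nz2[measurable]: "Nz t \<in> borel_measurable N2" for t
  proof (rule measurableI)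
    fix U :: "real set" assume U: "U \<in> sets borel"
    have "Nz t -` U \<inter> space N2 = {\<omega> \<in> space M. Nz t \<omega> \<in> U}" unfolding spN2 by auto
    also have "\<dots> \<in> sigma_sets (space M) G2" by (rule sigma_sets.Basic) (use U in \<open>auto simp: G2_def\<close>)
    finally show "Nz t -` U \<inter> space N2 \<in> sets N2" unfolding sN2 .
  qed simp
  define X1 where "X1 \<omega> = (if R a \<omega> = j then 1 else 0) * (if R b \<omega> = j then 1 else (0::real))" for \<omega>
  define X2 where "X2 \<omega> = Nz a \<omega> * Nz b \<omega>" for \<omega>
  have X1N: "X1 \<in> borel_measurable N1" unfolding X1_def by measurable
  have X2N: "X2 \<in> borel_measurable N2" unfolding X2_def by measurable
  have X1M[measurable]: "X1 \<in> borel_measurable M" unfolding X1_def by measurable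
  have X2M[measurable]: "X2 \<in> borel_measurable M" unfolding X2_def by measurable
  have sub1: "sigma_sets (space M) {X1 -` A \<inter> space M | A. A \<in> sets borel} \<subseteq> sigma_sets (space M) G1"
  proof (rule sigma_sets_mono, safe)
    fix A :: "real set" assume "A \<in> sets borel"
    hence "X1 -` A \<inter> space N1 \<in> sets N1" using X1N by (rule measurable_sets[rotated])
    thus "X1 -` A \<inter> space M \<in> sigma_sets (space M) G1" using sN1 spN1 by simp
  qed
  have sub2: "sigma_sets (space M) {X2 -` A \<inter> space M | A. A \<in> sets borel} \<subseteq> sigma_sets (space M) G2"
  proof (rule sigma_sets_mono, safe)
    fix A :: "real set" assume "A \<in> sets borel"
    hence "X2 -` A \<inter> space N2 \<in> sets N2" using X2N by (rule measurable_sets[rotated])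
    thus "X2 -` A \<inter> space M \<in> sigma_sets (space M) G2" using sN2 spN2 by simp
  qed
  have ind: "indep_var borel X1 borel X2"
    unfolding indep_var_eq
  proof (intro conjI)
    show "indep_set (sigma_sets (space M) {X1 -` A \<inter> space M | A. A \<in> sets borel})
                    (sigma_sets (space M) {X2 -` A \<inter> space M | A. A \<in> sets borel})"
      by (rule indep_set_mono[OF famind[folded G1_def G2_def] sub1 sub2])
  qed simp_all
  have int1: "integrable M X1"
    by (rule integrable_const_bound[where B=1]) (auto simp: X1_def)
  have int2: "integrable M X2"
  proof (rule integrable_const_bound[where B="BN * BN"])
    show "AE \<omega> in M. norm (X2 \<omega>) \<le> BN * BN"
      using nb[of a] nb[of b]
    proof eventually_elim
      case (elim \<omega>)
      have "norm (X2 \<omega>) = \<bar>Nz a \<omega>\<bar> * \<bar>Nz b \<omega>\<bar>" unfolding X2_def by (simp add: abs_mult)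
      also have "\<dots> \<le> BN * BN" using elim by (intro mult_mono) auto
      finally show ?case .
    qed
  qed simp
  have intN: "integrable M (Nz t)" for t
    by (rule integrable_const_bound[where B=BN]) (use nb[of t] in auto)
  have EX2: "expectation X2 = 0"
  proof -
    have indN: "indep_vars (\<lambda>_. borel) Nz {a, b}" by (rule indep_vars_subset[OF nind]) simp
    have "expectation (\<lambda>\<omega>. \<Prod>t\<in>{a,b}. Nz t \<omega>) = (\<Prod>t\<in>{a,b}. expectation (Nz t))"
      by (rule indep_vars_lebesgue_integral[OF _ indN]) (auto intro: intN)
    thus ?thesis unfolding X2_def using ab nmean by simp
  qed
  have "expectation (\<lambda>\<omega>. X1 \<omega> * X2 \<omega>) = expectation X1 * expectation X2"
    by (rule indep_var_lebesgue_integral[OF ind int1 int2])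
  also have "\<dots> = 0" using EX2 by simp
  finally have "expectation (\<lambda>\<omega>. X1 \<omega> * X2 \<omega>) = 0" .
  moreover have "(\<lambda>\<omega>. ((if R a \<omega> = j then 1 else 0) * Nz a \<omega>) * ((if R b \<omega> = j then 1 else 0) * Nz b \<omega>)) = (\<lambda>\<omega>. X1 \<omega> * X2 \<omega>)"
    unfolding X1_def X2_def by (auto simp: fun_eq_iff)
  ultimately show ?thesis by simp
qed

end


lemma bnd01: "\<bar>(if P then 1 else 0) - (x::real) * (if Q then 1 else 0)\<bar> \<le> 1 + \<bar>x\<bar>"
  by (cases P; cases Q) auto

lemma dsum_split:
  fixes f g :: "nat \<Rightarrow> nat \<Rightarrow> real"
  shows "(\<Sum>i<L. \<Sum>k<L. f i k - c * g i k) = (\<Sum>i<L. \<Sum>k<L. f i k) - c * (\<Sum>i<L. \<Sum>k<L. g i k)"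
  by (simp add: sum_subtractf sum_distrib_left)

lemma dsum_delta:
  fixes x :: "nat \<Rightarrow> nat \<Rightarrow> real"
  assumes "j < L"
  shows "(\<Sum>i<L. \<Sum>k<L. if k = j then x i k else 0) = (\<Sum>i<L. x i j)"
  using assms by (simp add: sum.delta)

lemma dsum_delta2:
  fixes x :: "nat \<Rightarrow> nat \<Rightarrow> real"
  assumes "i < L" "j < L"
  shows "(\<Sum>i'<L. \<Sum>k<L. if i' = i \<and> k = j then x i' k else 0) = x i j"
proof -
  have "(\<Sum>k<L. if i' = i \<and> k = j then x i' k else 0) = (if i' = i then x i' j else 0)" for i'
    using assms by (cases "i' = i") (simp_all add: sum.delta)
  hence "(\<Sum>i'<L. \<Sum>k<L. if i' = i \<and> k = j then x i' k else 0) = (\<Sum>i'<L. if i' = i then x i' j else 0)"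
    by simp
  also have "\<dots> = x i j" using assms by (simp add: sum.delta)
  finally show ?thesis .
qed

theorem theorem2:
  fixes M :: "'w measure" and L :: nat and \<alpha> Cm Cs \<pi> :: real
    and \<phi> \<sigma> d0 :: "nat \<Rightarrow> real" and r :: "nat \<Rightarrow> nat \<Rightarrow> real"
    and I R :: "nat \<Rightarrow> 'w \<Rightarrow> nat" and Nz :: "nat \<Rightarrow> 'w \<Rightarrow> real" and j :: nat
  assumes P: "prob_space M"
    and alpha: "0 < \<alpha>" "\<alpha> \<le> 1"
    and costs: "0 \<le> Cm" "0 \<le> Cs"
    and phi_mono: "strict_mono_on {..<L} \<phi>"
    and phi_low: "\<phi> 0 > \<alpha> * (Cs + Cm)"
    and sigma_pos: "\<forall>i<L. 0 < \<sigma> i"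
    and sigma_sum: "(\<Sum>i<L. \<sigma> i) = 1"
    and r_nonneg: "\<forall>i<L. \<forall>k<L. 0 \<le> r i k"
    and r_stoch: "\<forall>i<L. (\<Sum>k<L. r i k) = 1"
    and I_meas: "\<forall>t. I t \<in> measurable M (count_space UNIV)"
    and R_meas: "\<forall>t. R t \<in> measurable M (count_space UNIV)"
    and N_meas: "\<forall>t. Nz t \<in> borel_measurable M"
    and pair_dist: "\<forall>t. \<forall>i<L. \<forall>k<L.
                      measure M {\<omega> \<in> space M. I t \<omega> = i \<and> R t \<omega> = k} = \<sigma> i * r i k"
    and pair_indep: "prob_space.indep_vars M (\<lambda>_. count_space UNIV) (\<lambda>t \<omega>. (I t \<omega>, R t \<omega>)) UNIV"
    and noise_indep: "prob_space.indep_vars M (\<lambda>_. borel) Nz UNIV"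
    and noise_ident: "\<forall>t. distr M borel (Nz t) = distr M borel (Nz 0)"
    and noise_bdd: "\<exists>B. \<forall>t. AE \<omega> in M. \<bar>Nz t \<omega>\<bar> \<le> B"
    and noise_mean: "\<forall>t. integral\<^sup>L M (Nz t) = 0"
    and families_indep: "prob_space.indep_set M
          (sigma_sets (space M)
             {{\<omega> \<in> space M. I t \<omega> = i \<and> R t \<omega> = k} | t i k. True})
          (sigma_sets (space M)
             {{\<omega> \<in> space M. Nz t \<omega> \<in> B} | t B. B \<in> sets borel})"
    and pi_nonneg: "0 \<le> \<pi>"
    and j_lt: "j < L"
    and mj_pos: "(\<Sum>i<L. \<sigma> i * r i j) > 0"
  shows "\<exists>d. gfun \<alpha> Cm Cs \<pi> \<phi> \<sigma> r L j d = 0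
           \<and> (\<forall>d'. gfun \<alpha> Cm Cs \<pi> \<phi> \<sigma> r L j d' = 0 \<longrightarrow> d' = d)
           \<and> fixed_point_eq \<alpha> Cm Cs \<pi> \<phi> \<sigma> r L j d
           \<and> (\<forall>d'. fixed_point_eq \<alpha> Cm Cs \<pi> \<phi> \<sigma> r L j d' \<longrightarrow> d' = d)
           \<and> (AE \<omega> in M.
                (\<lambda>t. Dbar \<alpha> Cm Cs \<pi> \<phi> d0 (\<lambda>s. I s \<omega>) (\<lambda>s. R s \<omega>) (\<lambda>s. Nz s \<omega>) j t)
                  \<longlonglongrightarrow> d)"
proof -
  interpret P: prob_space M by (rule P)
  have w0: "\<And>i. i < L \<Longrightarrow> \<sigma> i * r i j \<ge> 0"
    using sigma_pos r_nonneg j_lt by (simp add: less_imp_le)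
  interpret model \<alpha> Cm Cs \<pi> \<phi> \<sigma> r L j
    by unfold_locales (use alpha pi_nonneg phi_mono w0 mj_pos in auto)
  obtain ds where fx: "FF ds = ds" using exists_fix by blast
  have g0: "gfun \<alpha> Cm Cs \<pi> \<phi> \<sigma> r L j ds = 0" using gfun_eq fx by simp
  have guniq: "\<forall>d'. gfun \<alpha> Cm Cs \<pi> \<phi> \<sigma> r L j d' = 0 \<longrightarrow> d' = ds"
    using gfun_eq unique_fix fx by fastforce
  have fpe: "fixed_point_eq \<alpha> Cm Cs \<pi> \<phi> \<sigma> r L j ds" using fixed_point_iff fx by simp
  have fpuniq: "\<forall>d'. fixed_point_eq \<alpha> Cm Cs \<pi> \<phi> \<sigma> r L j d' \<longrightarrow> d' = ds"
    using fixed_point_iff unique_fix fx by blast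
  obtain BN where nb: "\<And>t. AE \<omega> in M. \<bar>Nz t \<omega>\<bar> \<le> BN" using noise_bdd by blast
  have Im[measurable]: "\<And>t. I t \<in> measurable M (count_space UNIV)" using I_meas by blast
  have Rm[measurable]: "\<And>t. R t \<in> measurable M (count_space UNIV)" using R_meas by blast
  have Nm[measurable]: "\<And>t. Nz t \<in> borel_measurable M" using N_meas by blast
  have pd: "\<And>t i k. i < L \<Longrightarrow> k < L \<Longrightarrow> P.prob {\<omega>\<in>space M. I t \<omega> = i \<and> R t \<omega> = k} = \<sigma> i * r i k"
    using pair_dist by blast
  have rs: "\<And>i. i < L \<Longrightarrow> (\<Sum>k<L. r i k) = 1" using r_stoch by blast
  have AEL: "AE \<omega> in M. \<forall>t. I t \<omega> < L \<and> R t \<omega> < L"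
    by (rule P.pair_AE_lt[OF Im Rm pd sigma_sum rs])
  have tot: "(\<Sum>i<L. \<Sum>k<L. \<sigma> i * r i k) = 1"
    using sigma_sum rs by (simp add: sum_distrib_left[symmetric])
  have mj: "(\<Sum>i<L. \<sigma> i * r i j) = m" unfolding m_def ..
  have slln_pair: "AE \<omega> in M. (\<lambda>t. (\<Sum>s<t. h (I s \<omega>, R s \<omega>)) / real t) \<longlonglongrightarrow> 0"
    if hb: "\<And>p. \<bar>h p\<bar> \<le> H" and hm: "(\<Sum>i<L. \<Sum>k<L. h (i, k) * (\<sigma> i * r i k)) = 0" for h :: "nat \<times> nat \<Rightarrow> real" and H
  proof (rule P.slln_uncorr[where B=H])
    show "\<And>s. (\<lambda>\<omega>. h (I s \<omega>, R s \<omega>)) \<in> borel_measurable M" by measurable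
    show "\<And>s. AE \<omega> in M. \<bar>h (I s \<omega>, R s \<omega>)\<bar> \<le> H" using hb by simp
    fix a b :: nat assume ab: "a \<noteq> b"
    have E0: "P.expectation (\<lambda>\<omega>. h (I t \<omega>, R t \<omega>)) = 0" for t
      using P.pair_expect[OF Im Rm pd AEL, of "\<lambda>i k. h (i, k)" t] hm by simp
    show "P.expectation (\<lambda>\<omega>. h (I a \<omega>, R a \<omega>) * h (I b \<omega>, R b \<omega>)) = 0"
      using P.pair_indep_prod[where h=h and H=H, OF Im Rm pair_indep hb ab] E0 by simp
  qed
  have AEJ: "AE \<omega> in M. (\<lambda>t. (\<Sum>s<t. (if R s \<omega> = j then 1 else 0) - m) / real t) \<longlonglongrightarrow> 0"
  proof -
    have "AE \<omega> in M. (\<lambda>t. (\<Sum>s<t. (\<lambda>p. (if snd p = j then 1 else 0) - m) (I s \<omega>, R s \<omega>)) / real t) \<longlonglongrightarrow> 0"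
    proof (rule slln_pair)
      show "\<bar>(if snd p = j then 1 else 0) - m\<bar> \<le> 1 + \<bar>m\<bar>" for p :: "nat \<times> nat" by auto
      have "(\<Sum>i<L. \<Sum>k<L. ((if k = j then 1 else 0) - m) * (\<sigma> i * r i k))
          = (\<Sum>i<L. \<Sum>k<L. (if k = j then \<sigma> i * r i k else 0) - m * (\<sigma> i * r i k))"
        by (intro sum.cong refl) (simp add: algebra_simps)
      also have "\<dots> = (\<Sum>i<L. \<Sum>k<L. (if k = j then \<sigma> i * r i k else 0)) - m * (\<Sum>i<L. \<Sum>k<L. \<sigma> i * r i k)"
        by (rule dsum_split)
      also have "\<dots> = 0" unfolding dsum_delta[OF j_lt] tot mj by simp
      finally show "(\<Sum>i<L. \<Sum>k<L. (\<lambda>p. (if snd p = j then 1 else 0) - m) (i, k) * (\<sigma> i * r i k)) = 0" by simp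
    qed
    thus ?thesis by simp
  qed
  have AEA1: "AE \<omega> in M. (\<lambda>t. (\<Sum>s<t. (if I s \<omega> = i \<and> R s \<omega> = j then 1 else 0) - w i / m * (if R s \<omega> = j then 1 else 0)) / real t) \<longlonglongrightarrow> 0"
    if iL: "i < L" for i
  proof -
    have "AE \<omega> in M. (\<lambda>t. (\<Sum>s<t. (\<lambda>p. (if fst p = i \<and> snd p = j then 1 else 0) - w i / m * (if snd p = j then 1 else 0)) (I s \<omega>, R s \<omega>)) / real t) \<longlonglongrightarrow> 0"
    proof (rule slln_pair)
      show "\<bar>(if fst p = i \<and> snd p = j then 1 else 0) - w i / m * (if snd p = j then 1 else 0)\<bar> \<le> 1 + \<bar>w i / m\<bar>" for p :: "nat \<times> nat"
        by (rule bnd01)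
      have "(\<Sum>i'<L. \<Sum>k<L. ((if i' = i \<and> k = j then 1 else 0) - w i / m * (if k = j then 1 else 0)) * (\<sigma> i' * r i' k))
          = (\<Sum>i'<L. \<Sum>k<L. (if i' = i \<and> k = j then \<sigma> i' * r i' k else 0) - w i / m * (if k = j then \<sigma> i' * r i' k else 0))"
        by (intro sum.cong refl) (simp add: algebra_simps)
      also have "\<dots> = (\<Sum>i'<L. \<Sum>k<L. (if i' = i \<and> k = j then \<sigma> i' * r i' k else 0)) - w i / m * (\<Sum>i'<L. \<Sum>k<L. (if k = j then \<sigma> i' * r i' k else 0))"
        by (rule dsum_split)
      also have "(\<Sum>i'<L. \<Sum>k<L. (if i' = i \<and> k = j then \<sigma> i' * r i' k else 0)) = w i"
        unfolding dsum_delta2[OF iL j_lt] w_def ..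
      also have "(\<Sum>i'<L. \<Sum>k<L. (if k = j then \<sigma> i' * r i' k else 0)) = m"
        unfolding dsum_delta[OF j_lt] mj ..
      also have "w i - w i / m * m = 0" using m_pos by simp
      finally show "(\<Sum>i'<L. \<Sum>k<L. (\<lambda>p. (if fst p = i \<and> snd p = j then 1 else 0) - w i / m * (if snd p = j then 1 else 0)) (i', k) * (\<sigma> i' * r i' k)) = 0" by simp
    qed
    thus ?thesis by simp
  qed
  have AEA: "AE \<omega> in M. \<forall>i. i < L \<longrightarrow> (\<lambda>t. (\<Sum>s<t. (if I s \<omega> = i \<and> R s \<omega> = j then 1 else 0) - w i / m * (if R s \<omega> = j then 1 else 0)) / real t) \<longlonglongrightarrow> 0"
    unfolding AE_all_countable using AEA1 by (auto intro: AE_I2)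
  have AEN: "AE \<omega> in M. (\<lambda>t. (\<Sum>s<t. (if R s \<omega> = j then 1 else 0) * Nz s \<omega>) / real t) \<longlonglongrightarrow> 0"
  proof (rule P.slln_uncorr[where B=BN])
    show "\<And>s. (\<lambda>\<omega>. (if R s \<omega> = j then 1 else 0) * Nz s \<omega>) \<in> borel_measurable M" by measurable
    show "AE \<omega> in M. \<bar>(if R s \<omega> = j then 1 else 0) * Nz s \<omega>\<bar> \<le> BN" for s
      using nb[of s] by eventually_elim (auto simp: abs_mult)
    fix a b :: nat assume ab: "a \<noteq> b"
    show "P.expectation (\<lambda>\<omega>. (if R a \<omega> = j then 1 else 0) * Nz a \<omega> * ((if R b \<omega> = j then 1 else 0) * Nz b \<omega>)) = 0"
      by (rule P.noise_uncorr[OF Im Rm Nm families_indep noise_indep _ nb ab]) (use noise_mean in auto)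
  qed
  have AEnz: "AE \<omega> in M. \<forall>s. \<bar>Nz s \<omega>\<bar> \<le> BN" using nb by (simp add: AE_all_countable)
  have conv: "AE \<omega> in M. (\<lambda>t. Dbar \<alpha> Cm Cs \<pi> \<phi> d0 (\<lambda>s. I s \<omega>) (\<lambda>s. R s \<omega>) (\<lambda>s. Nz s \<omega>) j t) \<longlonglongrightarrow> ds"
    using AEL AEnz AEJ AEA AEN
  proof eventually_elim
    case (elim \<omega>)
    interpret tr: traj \<alpha> Cm Cs \<pi> \<phi> \<sigma> r L j d0 "\<lambda>s. I s \<omega>" "\<lambda>s. R s \<omega>" "\<lambda>s. Nz s \<omega>" BN
      by unfold_locales (use elim in auto)
    have "tr.Db \<longlonglongrightarrow> ds" by (rule tr.Db_conv[OF fx])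
    thus ?case unfolding tr.Db_def .
  qed
  show ?thesis using g0 guniq fpe fpuniq conv by blast
qed


end
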